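(* Let $A$ be a $[5,1]$ stabilizer tensor and $n,d\ge1$. For any $x\in\mathcal{P}_n$, $x\in S_L(A,n,d)$ if and only if $x$ commutes with every element of $\mathcal{Z}_L(A,n,d)$.
   Context: Pauli operators are considered modulo phases; $\mathcal{P}_n$ denotes the $n$-qubit Pauli group modulo phases. A $[5,1]$ stabilizer tensor is a tensor $A^{s}_{udlr}$ with all indices in $\{0,1\}$ such that the 5-qubit vector $\sum A^{s}_{udlr}|s,u,d,l,r\rangle$ is a stabilizer state; $s$ is the physical leg and $u,d,l,r$ are the virtual legs. Cylindrical stabilizer PEPS: place a copy of $A$ at every site $(i,j)$, $i\in\mathbb{Z}_n$, $j=1,\dots,d$. Contract the up leg of $(i,j)$ with the down leg of $(i+1,j)$ (indices mod $n$), and the right leg of $(i,j)$ with the left leg of $(i,j+1)$ for $j<d$; contract every physical leg with $|+\rangle$. The result is a stabilizer state on the $n$ left legs of column 1 (register $L$) and $n$ right legs of column $d$ (register $R$); $S(A,n,d)$ is its stabilizer group (mod phases). $S_L(A,n,d)\subseteq\mathcal{P}_n$ is the restriction of $S(A,n,d)$ to $L$ (the group of $L$-parts of its elements) and $\mathcal{Z}_L(A,n,d)$ is the center of $S_L(A,n,d)$. *)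

theory Defs
  imports Complex_Main
begin

text \<open>Pauli operators modulo phases on m qubits: p i = (x-bit, z-bit), i.e. X^x Z^z on qubit i;
  identity outside qubits 0..m-1.\<close>
definition paulis :: "nat \<Rightarrow> (nat \<Rightarrow> bool \<times> bool) set" where
  "paulis m = {p. \<forall>i\<ge>m. p i = (False, False)}"

definition pauli_commute :: "nat \<Rightarrow> (nat \<Rightarrow> bool \<times> bool) \<Rightarrow> (nat \<Rightarrow> bool \<times> bool) \<Rightarrow> bool" where
  "pauli_commute m p q \<longleftrightarrow>
     even (card {i \<in> {0..<m}. (fst (p i) \<and> snd (q i)) \<noteq> (snd (p i) \<and> fst (q i))})"

text \<open>Action of the Pauli X^a Z^b on an m-qubit vector f (given by its amplitudes on basis
  states t, where only t 0, ..., t (m-1) matter):  X^a Z^b |s> = (-1)^(b.s) |s xor a>.\<close>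
definition pauli_apply :: "nat \<Rightarrow> (nat \<Rightarrow> bool \<times> bool) \<Rightarrow> ((nat \<Rightarrow> bool) \<Rightarrow> complex)
    \<Rightarrow> (nat \<Rightarrow> bool) \<Rightarrow> complex" where
  "pauli_apply m p f t =
     (-1) ^ card {i \<in> {0..<m}. snd (p i) \<and> (t i \<noteq> fst (p i))}
     * f (\<lambda>i. if i < m \<and> fst (p i) then \<not> t i else t i)"

definition stabilizer_state :: "nat \<Rightarrow> ((nat \<Rightarrow> bool) \<Rightarrow> complex) \<Rightarrow> bool" where
  "stabilizer_state m v \<longleftrightarrow>
     (\<exists>t. v t \<noteq> 0) \<and>
     card {p \<in> paulis m. \<exists>c. \<forall>t. pauli_apply m p v t = c * v t} = 2 ^ m"

text \<open>A tensor A^s_{udlr}, arguments in the order s u d l r, index value 0 = False, 1 = True.\<close>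
type_synonym tensor = "bool \<Rightarrow> bool \<Rightarrow> bool \<Rightarrow> bool \<Rightarrow> bool \<Rightarrow> complex"

definition stabilizer_tensor_51 :: "tensor \<Rightarrow> bool" where
  "stabilizer_tensor_51 A \<longleftrightarrow> stabilizer_state 5 (\<lambda>t. A (t 0) (t 1) (t 2) (t 3) (t 4))"

text \<open>Cylindrical PEPS: sites (i,j), i in Z_n (0..n-1), j in 0..d-1 (column j+1 of the paper).
  Physical indices: set Sp (s i j = ((i,j) \<in> Sp)), contracted with |+> = (|0>+|1>)/sqrt 2.
  Vertical bonds: V; (i,j) \<in> V is the index shared by the up leg of (i,j) and the down leg of
  (i+1 mod n, j).  Horizontal bonds: index hb i j for j = 0..d, shared by the right leg of (i,j-1)
  and the left leg of (i,j); hb i 0 = l i (register L), hb i d = r i (register R),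
  internal ones given by the set H.\<close>
definition peps_state :: "tensor \<Rightarrow> nat \<Rightarrow> nat \<Rightarrow> (nat \<Rightarrow> bool) \<Rightarrow> (nat \<Rightarrow> bool) \<Rightarrow> complex" where
  "peps_state A n d l r =
     (\<Sum>Sp\<in>Pow ({0..<n} \<times> {0..<d}). \<Sum>V\<in>Pow ({0..<n} \<times> {0..<d}).
        \<Sum>H\<in>Pow ({0..<n} \<times> {1..<d}).
        (let hb = (\<lambda>i j. if j = 0 then l i else if j = d then r i else (i, j) \<in> H) in
         \<Prod>(i, j)\<in>{0..<n} \<times> {0..<d}.
           complex_of_real (1 / sqrt 2) *
           A ((i, j) \<in> Sp) ((i, j) \<in> V) (((i + n - 1) mod n, j) \<in> V) (hb i j) (hb i (j + 1))))"

definition S_full :: "tensor \<Rightarrow> nat \<Rightarrow> nat \<Rightarrow> ((nat \<Rightarrow> bool \<times> bool) \<times> (nat \<Rightarrow> bool \<times> bool)) set" where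
  "S_full A n d = {(pL, pR). pL \<in> paulis n \<and> pR \<in> paulis n \<and>
     (\<exists>c. \<forall>l r. pauli_apply n pL (\<lambda>l'. pauli_apply n pR (peps_state A n d l') r) l
                  = c * peps_state A n d l r)}"

definition S_L :: "tensor \<Rightarrow> nat \<Rightarrow> nat \<Rightarrow> (nat \<Rightarrow> bool \<times> bool) set" where
  "S_L A n d = fst ` S_full A n d"

definition Z_L :: "tensor \<Rightarrow> nat \<Rightarrow> nat \<Rightarrow> (nat \<Rightarrow> bool \<times> bool) set" where
  "Z_L A n d = {z \<in> S_L A n d. \<forall>y \<in> S_L A n d. pauli_commute n z y}"

end

theory Submission
  imports Defs "HOL-Library.FuncSet"
begin



definition pz :: "'v \<Rightarrow> bool \<times> bool" where "pz = (\<lambda>_. (False,False))"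
definition padd :: "('v \<Rightarrow> bool \<times> bool) \<Rightarrow> ('v \<Rightarrow> bool \<times> bool) \<Rightarrow> 'v \<Rightarrow> bool \<times> bool" where
  "padd p q = (\<lambda>i. (fst (p i) \<noteq> fst (q i), snd (p i) \<noteq> snd (q i)))"
definition VI :: "'v set \<Rightarrow> ('v \<Rightarrow> bool \<times> bool) set" where
  "VI I = {p. \<forall>i. i \<notin> I \<longrightarrow> p i = (False,False)}"
definition om1 :: "bool \<times> bool \<Rightarrow> bool \<times> bool \<Rightarrow> bool" where
  "om1 a b = ((fst a \<and> snd b) \<noteq> (snd a \<and> fst b))"
definition sg :: "'v set \<Rightarrow> ('v \<Rightarrow> bool) \<Rightarrow> complex" where
  "sg K P = (\<Prod>i\<in>K. if P i then -1 else 1)"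
definition sympl :: "'v set \<Rightarrow> ('v \<Rightarrow> bool \<times> bool) \<Rightarrow> ('v \<Rightarrow> bool \<times> bool) \<Rightarrow> complex" where
  "sympl I p q = sg I (\<lambda>i. om1 (p i) (q i))"
definition perp :: "'v set \<Rightarrow> ('v \<Rightarrow> bool \<times> bool) set \<Rightarrow> ('v \<Rightarrow> bool \<times> bool) set" where
  "perp I U = {q \<in> VI I. \<forall>u\<in>U. sympl I q u = 1}"
definition subgrp :: "'v set \<Rightarrow> ('v \<Rightarrow> bool \<times> bool) set \<Rightarrow> bool" where
  "subgrp I U \<longleftrightarrow> U \<subseteq> VI I \<and> pz \<in> U \<and> (\<forall>p\<in>U. \<forall>q\<in>U. padd p q \<in> U)"
definition lag :: "'v set \<Rightarrow> ('v \<Rightarrow> bool \<times> bool) set \<Rightarrow> bool" where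
  "lag I S \<longleftrightarrow> subgrp I S \<and> perp I S = S"

lemma padd_comm: "padd p q = padd q p" by (auto simp: padd_def)
lemma padd_assoc: "padd (padd p q) r = padd p (padd q r)" by (auto simp: padd_def)
lemma padd_pz[simp]: "padd p pz = p" "padd pz p = p" by (auto simp: padd_def pz_def)
lemma padd_self[simp]: "padd p p = pz" by (auto simp: padd_def pz_def)
lemma padd_cancel[simp]: "padd (padd p q) q = p" unfolding padd_def fun_eq_iff prod_eq_iff by simp blast
lemma padd_VI: "p \<in> VI I \<Longrightarrow> q \<in> VI I \<Longrightarrow> padd p q \<in> VI I" by (auto simp: padd_def VI_def)
lemma pz_VI[simp]: "pz \<in> VI I" by (auto simp: pz_def VI_def)

lemma sg_xor: "sg K (\<lambda>i. P i \<noteq> Q i) = sg K P * sg K Q"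
  unfolding sg_def prod.distrib[symmetric] by (rule prod.cong) auto
lemma sg_sq: "sg K P * sg K P = 1"
  unfolding sg_def prod.distrib[symmetric] by (rule prod.neutral) auto
lemma sg_nz: "sg K P \<noteq> 0" using sg_sq[of K P] by auto
lemma sg_false: "(\<And>i. i \<in> K \<Longrightarrow> \<not> P i) \<Longrightarrow> sg K P = 1"
  unfolding sg_def by (rule prod.neutral) auto
lemma sg_cong: "(\<And>i. i \<in> K \<Longrightarrow> P i = Q i) \<Longrightarrow> sg K P = sg K Q"
  unfolding sg_def by (rule prod.cong) auto
lemma sg_pm: "sg K P = 1 \<or> sg K P = -1"
proof -
  have "(sg K P - 1) * (sg K P + 1) = 0" using sg_sq[of K P] by (simp add: algebra_simps)
  thus ?thesis by (auto simp: eq_neg_iff_add_eq_0)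
qed
lemma sg_split: "finite I \<Longrightarrow> C \<subseteq> I \<Longrightarrow> sg I P = sg (I - C) P * sg C P"
  unfolding sg_def by (metis finite_subset prod.subset_diff)
lemma sg_single: "finite I \<Longrightarrow> i \<in> I \<Longrightarrow> (\<And>j. j \<in> I \<Longrightarrow> j \<noteq> i \<Longrightarrow> \<not> P j) \<Longrightarrow>
   sg I P = (if P i then -1 else 1)"
  unfolding sg_def by (subst prod.remove[of I i]) (auto intro!: prod.neutral)

lemma om1_sym: "om1 a b = om1 b a" by (auto simp: om1_def)
lemma sympl_sym: "sympl I p q = sympl I q p" unfolding sympl_def by (simp add: om1_sym)
lemma sympl_add1: "sympl I (padd p q) r = sympl I p r * sympl I q r"
  unfolding sympl_def sg_xor[symmetric] by (rule sg_cong) (auto simp: om1_def padd_def)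
lemma sympl_add2: "sympl I r (padd p q) = sympl I r p * sympl I r q"
  using sympl_add1 sympl_sym by metis
lemma sympl_pz[simp]: "sympl I pz q = 1" "sympl I q pz = 1"
  unfolding sympl_def by (auto intro!: sg_false simp: om1_def pz_def)
lemma sympl_sq: "sympl I p q * sympl I p q = 1" unfolding sympl_def by (rule sg_sq)
lemma sympl_pm: "sympl I p q = 1 \<or> sympl I p q = -1" unfolding sympl_def by (rule sg_pm)
lemma sympl_self[simp]: "sympl I p p = 1"
  unfolding sympl_def by (rule sg_false) (auto simp: om1_def)

lemma flip_sum:
  fixes f :: "'a \<Rightarrow> complex"
  assumes "finite G" "\<And>x. x \<in> G \<Longrightarrow> h x \<in> G" "\<And>x. x \<in> G \<Longrightarrow> h (h x) = x"
    "\<And>x. x \<in> G \<Longrightarrow> f (h x) = - f x"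
  shows "sum f G = 0"
proof -
  have b: "bij_betw h G G" by (rule bij_betw_byWitness[where f'=h]) (use assms in auto)
  have "sum f G = sum (f \<circ> h) G" using sum.reindex_bij_betw[OF b, of f] by simp
  also have "\<dots> = - sum f G" by (simp add: assms sum_negf[symmetric])
  finally show ?thesis by simp
qed

lemma VI_bij: "bij_betw (\<lambda>p. restrict p I) (VI I) (PiE I (\<lambda>_. UNIV))"
proof (rule bij_betw_byWitness[where f'="\<lambda>f i. if i \<in> I then f i else (False,False)"])
  show "\<forall>a\<in>VI I. (\<lambda>i. if i \<in> I then restrict a I i else (False, False)) = a"
    by (auto simp: VI_def fun_eq_iff)
  show "\<forall>a'\<in>PiE I (\<lambda>_. UNIV). restrict (\<lambda>i. if i \<in> I then a' i else (False, False)) I = a'"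
    by (auto simp: fun_eq_iff PiE_iff extensional_def)
  show "(\<lambda>p. restrict p I) ` VI I \<subseteq> PiE I (\<lambda>_. UNIV)" by auto
  show "(\<lambda>f i. if i \<in> I then f i else (False, False)) ` PiE I (\<lambda>_. UNIV) \<subseteq> VI I"
    by (auto simp: VI_def)
qed

lemma card_bb: "card (UNIV :: (bool\<times>bool) set) = 4"
proof -
  have "(UNIV :: (bool\<times>bool) set) = {(False,False),(False,True),(True,False),(True,True)}" by auto
  show ?thesis unfolding \<open>UNIV = _\<close> by simp
qed

lemma card_VI: "finite I \<Longrightarrow> card (VI I) = 4 ^ card I"
proof -
  assume f: "finite I"
  have "card (VI I) = card (PiE I (\<lambda>_. (UNIV :: (bool\<times>bool) set)))" using bij_betw_same_card[OF VI_bij] .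
  also have "\<dots> = (\<Prod>i\<in>I. card (UNIV :: (bool\<times>bool) set))" using f by (rule card_PiE)
  also have "\<dots> = 4 ^ card I" unfolding card_bb by (rule prod_constant)
  finally show ?thesis .
qed

lemma finite_VI: "finite I \<Longrightarrow> finite (VI I)"
proof -
  assume "finite I"
  hence "finite (PiE I (\<lambda>_. (UNIV :: (bool\<times>bool) set)))" by (intro finite_PiE) auto
  thus ?thesis using bij_betw_finite[OF VI_bij] by blast
qed




lemma perp_VI: "perp I U \<subseteq> VI I" by (auto simp: perp_def)

lemma perp_subgrp: "subgrp I (perp I U)"
  unfolding subgrp_def perp_def by (auto simp: padd_VI sympl_add1)

lemma perp_anti: "A \<subseteq> B \<Longrightarrow> perp I B \<subseteq> perp I A" by (auto simp: perp_def)

lemma sum_perp_inner: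
  assumes "subgrp I U" "finite U" "x \<in> VI I"
  shows "(\<Sum>u\<in>U. sympl I x u) = (if x \<in> perp I U then of_nat (card U) else 0)"
proof (cases "x \<in> perp I U")
  case True
  hence "\<forall>u\<in>U. sympl I x u = 1" by (auto simp: perp_def)
  thus ?thesis using True by simp
next
  case False
  then obtain u0 where u0: "u0 \<in> U" "sympl I x u0 \<noteq> 1" using assms(3) by (auto simp: perp_def)
  hence m: "sympl I x u0 = -1" using sympl_pm by metis
  have "(\<Sum>u\<in>U. sympl I x u) = 0"
    by (rule flip_sum[where h="\<lambda>u. padd u u0"]) (use assms u0 m in \<open>auto simp: subgrp_def sympl_add2\<close>)
  thus ?thesis using False by simp
qed

lemma exists_anti:
  assumes "finite I" "u \<in> VI I" "u \<noteq> pz"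
  shows "\<exists>x0\<in>VI I. sympl I x0 u = -1"
proof -
  obtain i where i: "u i \<noteq> (False,False)" using assms(3) by (auto simp: pz_def fun_eq_iff)
  hence iI: "i \<in> I" using assms(2) by (auto simp: VI_def)
  define v where "v = (if snd (u i) then (True,False) else (False,True))"
  define x0 where "x0 = pz(i := v)"
  have "x0 \<in> VI I" using iI by (auto simp: x0_def VI_def pz_def)
  moreover have "sympl I x0 u = -1"
    unfolding sympl_def
    by (subst sg_single[OF assms(1) iI]) (use i in \<open>auto simp: x0_def pz_def om1_def v_def prod_eq_iff\<close>)
  ultimately show ?thesis by blast
qed

lemma sum_VI_inner:
  assumes "finite I" "u \<in> VI I"
  shows "(\<Sum>x\<in>VI I. sympl I x u) = (if u = pz then of_nat (card (VI I)) else 0)"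
proof (cases "u = pz")
  case True thus ?thesis by simp
next
  case False
  then obtain x0 where x0: "x0 \<in> VI I" "sympl I x0 u = -1" using exists_anti assms by blast
  have "(\<Sum>x\<in>VI I. sympl I x u) = 0"
    by (rule flip_sum[where h="\<lambda>x. padd x x0"]) (use assms x0 finite_VI in \<open>auto simp: padd_VI sympl_add1\<close>)
  thus ?thesis using False by simp
qed

lemma perp_card:
  assumes "finite I" "subgrp I U"
  shows "card U * card (perp I U) = card (VI I)"
proof -
  have fV: "finite (VI I)" using finite_VI[OF assms(1)] .
  have fU: "finite U" using assms(2) fV by (auto simp: subgrp_def intro: finite_subset)
  have "(\<Sum>x\<in>VI I. \<Sum>u\<in>U. sympl I x u) = (\<Sum>x\<in>VI I. if x \<in> perp I U then of_nat (card U) else 0)"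
    by (rule sum.cong) (use sum_perp_inner[OF assms(2) fU] in auto)
  also have "\<dots> = of_nat (card U) * of_nat (card (VI I \<inter> perp I U))"
    by (simp add: sum.If_cases fV)
  also have "VI I \<inter> perp I U = perp I U" using perp_VI by blast
  finally have 1: "(\<Sum>x\<in>VI I. \<Sum>u\<in>U. sympl I x u) = of_nat (card U * card (perp I U))" by simp
  have "(\<Sum>x\<in>VI I. \<Sum>u\<in>U. sympl I x u) = (\<Sum>u\<in>U. \<Sum>x\<in>VI I. sympl I x u)" by (rule sum.swap)
  also have "\<dots> = (\<Sum>u\<in>U. if u = pz then of_nat (card (VI I)) else 0)"
    by (rule sum.cong) (use sum_VI_inner[OF assms(1)] assms(2) in \<open>auto simp: subgrp_def\<close>)
  also have "\<dots> = of_nat (card (VI I))" using assms(2) fU by (simp add: subgrp_def)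
  finally show ?thesis using 1 by (metis of_nat_eq_iff)
qed

lemma subgrp_finite: "finite I \<Longrightarrow> subgrp I U \<Longrightarrow> finite U"
  using finite_VI by (auto simp: subgrp_def intro: finite_subset)

lemma perp_perp:
  assumes "finite I" "subgrp I U"
  shows "perp I (perp I U) = U"
proof -
  have sub: "U \<subseteq> perp I (perp I U)" using assms(2) by (auto simp: perp_def subgrp_def sympl_sym)
  have c1: "card U * card (perp I U) = card (VI I)" by (rule perp_card[OF assms])
  have c2: "card (perp I (perp I U)) * card (perp I U) = card (VI I)"
    using perp_card[OF assms(1) perp_subgrp[of I U]] by (simp add: mult.commute)
  have "finite (perp I U)" using subgrp_finite[OF assms(1) perp_subgrp] .
  moreover have "pz \<in> perp I U" using perp_subgrp[of I U] by (simp add: subgrp_def)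
  ultimately have "card (perp I U) > 0" by (auto simp: card_gt_0_iff)
  hence "card (perp I (perp I U)) = card U" using c1 c2 by (metis mult_cancel2 not_gr0)
  thus ?thesis using sub subgrp_finite[OF assms(1) perp_subgrp] by (metis card_subset_eq)
qed

definition ssum :: "('v \<Rightarrow> bool \<times> bool) set \<Rightarrow> ('v \<Rightarrow> bool \<times> bool) set \<Rightarrow> ('v \<Rightarrow> bool \<times> bool) set" where
  "ssum A B = {padd a b | a b. a \<in> A \<and> b \<in> B}"

lemma ssum_subgrp: "subgrp I A \<Longrightarrow> subgrp I B \<Longrightarrow> subgrp I (ssum A B)"
  unfolding subgrp_def ssum_def
proof (intro conjI ballI)
  assume a: "A \<subseteq> VI I \<and> pz \<in> A \<and> (\<forall>p\<in>A. \<forall>q\<in>A. padd p q \<in> A)"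
     and b: "B \<subseteq> VI I \<and> pz \<in> B \<and> (\<forall>p\<in>B. \<forall>q\<in>B. padd p q \<in> B)"
  show "{padd a b |a b. a \<in> A \<and> b \<in> B} \<subseteq> VI I" using a b by (auto intro: padd_VI)
  show "pz \<in> {padd a b |a b. a \<in> A \<and> b \<in> B}" using a b by (metis (mono_tags, lifting) mem_Collect_eq padd_pz(1))
  fix p q assume "p \<in> {padd a b |a b. a \<in> A \<and> b \<in> B}" "q \<in> {padd a b |a b. a \<in> A \<and> b \<in> B}"
  then obtain a1 b1 a2 b2 where "p = padd a1 b1" "q = padd a2 b2" "a1 \<in> A" "a2 \<in> A" "b1 \<in> B" "b2 \<in> B" by blast
  moreover have "padd (padd a1 b1) (padd a2 b2) = padd (padd a1 a2) (padd b1 b2)"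
    by (metis padd_assoc padd_comm)
  ultimately show "padd p q \<in> {padd a b |a b. a \<in> A \<and> b \<in> B}" using a b by blast
qed

lemma perp_inter:
  assumes "finite I" "subgrp I A" "subgrp I B"
  shows "perp I (A \<inter> B) = ssum (perp I A) (perp I B)"
proof -
  let ?P = "ssum (perp I A) (perp I B)"
  have sP: "subgrp I ?P" by (rule ssum_subgrp[OF perp_subgrp perp_subgrp])
  have pzA: "pz \<in> perp I A" "pz \<in> perp I B" using perp_subgrp by (auto simp: subgrp_def)
  have "perp I ?P = A \<inter> B"
  proof
    show "perp I ?P \<subseteq> A \<inter> B"
    proof
      fix x assume x: "x \<in> perp I ?P"
      have "x \<in> perp I (perp I A)"
      proof -
        have "\<And>a. a \<in> perp I A \<Longrightarrow> sympl I x a = 1"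
        proof -
          fix a assume a: "a \<in> perp I A"
          have "padd a pz \<in> ?P" unfolding ssum_def using pzA a by force
          thus "sympl I x a = 1" using x unfolding perp_def[of I ?P] by simp
        qed
        thus ?thesis using x by (auto simp: perp_def)
      qed
      moreover have "x \<in> perp I (perp I B)"
      proof -
        have "\<And>a. a \<in> perp I B \<Longrightarrow> sympl I x a = 1"
        proof -
          fix a assume a: "a \<in> perp I B"
          have "padd pz a \<in> ?P" unfolding ssum_def using pzA a by force
          thus "sympl I x a = 1" using x unfolding perp_def[of I ?P] by simp
        qed
        thus ?thesis using x by (auto simp: perp_def)
      qed
      ultimately show "x \<in> A \<inter> B" using perp_perp assms by blast
    qed
    show "A \<inter> B \<subseteq> perp I ?P"
    proof
      fix x assume x: "x \<in> A \<inter> B"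
      have "x \<in> VI I" using x assms by (auto simp: subgrp_def)
      moreover have "\<forall>u\<in>?P. sympl I x u = 1"
        using x by (auto simp: ssum_def sympl_add2 perp_def sympl_sym)
      ultimately show "x \<in> perp I ?P" by (simp add: perp_def)
    qed
  qed
  hence "perp I (A \<inter> B) = perp I (perp I ?P)" by simp
  also have "\<dots> = ?P" by (rule perp_perp[OF assms(1) sP])
  finally show ?thesis .
qed

lemma lag_by_card:
  assumes "finite I" "subgrp I S" "\<And>p q. p \<in> S \<Longrightarrow> q \<in> S \<Longrightarrow> sympl I p q = 1"
    "card S * card S = card (VI I)"
  shows "lag I S"
proof -
  have sub: "S \<subseteq> perp I S" using assms(2,3) by (auto simp: perp_def subgrp_def)
  have "card S * card (perp I S) = card (VI I)" by (rule perp_card[OF assms(1,2)])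
  moreover have "card S > 0" using assms(2) subgrp_finite[OF assms(1,2)] by (auto simp: subgrp_def card_gt_0_iff)
  ultimately have "card (perp I S) = card S" using assms(4) by (metis mult_cancel1 not_gr0)
  hence "S = perp I S" using sub subgrp_finite[OF assms(1) perp_subgrp] by (metis card_subset_eq)
  thus ?thesis using assms(2) by (simp add: lag_def)
qed




definition flp :: "'v set \<Rightarrow> ('v \<Rightarrow> bool \<times> bool) \<Rightarrow> ('v \<Rightarrow> bool) \<Rightarrow> 'v \<Rightarrow> bool" where
  "flp I p t = (\<lambda>i. if i \<in> I \<and> fst (p i) then \<not> t i else t i)"
definition papp :: "'v set \<Rightarrow> ('v \<Rightarrow> bool \<times> bool) \<Rightarrow> (('v \<Rightarrow> bool) \<Rightarrow> complex) \<Rightarrow> ('v \<Rightarrow> bool) \<Rightarrow> complex" where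
  "papp I p f t = sg I (\<lambda>i. snd (p i) \<and> (t i \<noteq> fst (p i))) * f (flp I p t)"
definition stab :: "'v set \<Rightarrow> (('v \<Rightarrow> bool) \<Rightarrow> complex) \<Rightarrow> ('v \<Rightarrow> bool \<times> bool) set" where
  "stab I f = {p \<in> VI I. \<exists>c. \<forall>t. papp I p f t = c * f t}"
definition loc :: "'v set \<Rightarrow> (('v \<Rightarrow> bool) \<Rightarrow> complex) \<Rightarrow> bool" where
  "loc I f \<longleftrightarrow> (\<forall>t t'. (\<forall>i\<in>I. t i = t' i) \<longrightarrow> f t = f t')"
definition good :: "'v set \<Rightarrow> (('v \<Rightarrow> bool) \<Rightarrow> complex) \<Rightarrow> bool" where
  "good I f \<longleftrightarrow> (\<exists>S. lag I S \<and> S \<subseteq> stab I f)"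

lemma sg_prod_eq: "(\<And>i. i \<in> K \<Longrightarrow> (A i \<noteq> B i) = (C i \<noteq> D i)) \<Longrightarrow> sg K A * sg K B = sg K C * sg K D"
proof -
  assume h: "\<And>i. i \<in> K \<Longrightarrow> (A i \<noteq> B i) = (C i \<noteq> D i)"
  have "sg K A * sg K B = sg K (\<lambda>i. A i \<noteq> B i)" by (rule sg_xor[symmetric])
  also have "\<dots> = sg K (\<lambda>i. C i \<noteq> D i)" by (rule sg_cong) (rule h)
  also have "\<dots> = sg K C * sg K D" by (rule sg_xor)
  finally show ?thesis .
qed

lemma flp_comp: "flp I q (flp I p t) = flp I (padd p q) t"
  unfolding flp_def padd_def fun_eq_iff by simp

lemma papp_comp: "papp I p (papp I q f) t = sg I (\<lambda>i. snd (p i) \<and> fst (q i)) * papp I (padd p q) f t"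
proof -
  have "sg I (\<lambda>i. snd (p i) \<and> (t i \<noteq> fst (p i))) * sg I (\<lambda>i. snd (q i) \<and> (flp I p t i \<noteq> fst (q i)))
     = sg I (\<lambda>i. snd (p i) \<and> fst (q i)) * sg I (\<lambda>i. snd (padd p q i) \<and> (t i \<noteq> fst (padd p q i)))"
    by (rule sg_prod_eq) (auto simp: flp_def padd_def)
  thus ?thesis unfolding papp_def flp_comp by (simp add: algebra_simps)
qed

lemma papp_pz[simp]: "papp I pz f = f"
  by (auto simp: papp_def fun_eq_iff pz_def flp_def intro!: sg_false)

lemma papp_lin: "papp I p (\<lambda>t. c * f t) t = c * papp I p f t"
  by (simp add: papp_def algebra_simps)

lemma papp_cong: "(\<And>t. f t = g t) \<Longrightarrow> papp I p f t = papp I p g t"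
  by (simp add: papp_def)

lemma stab_eig: "p \<in> stab I f \<Longrightarrow> \<exists>c. papp I p f = (\<lambda>t. c * f t)"
  by (auto simp: stab_def fun_eq_iff)

lemma stab_subgrp: "subgrp I (stab I f)"
  unfolding subgrp_def
proof (intro conjI ballI)
  show "stab I f \<subseteq> VI I" by (auto simp: stab_def)
  show "pz \<in> stab I f" by (auto simp: stab_def intro: exI[of _ 1])
  fix p q assume p: "p \<in> stab I f" and q: "q \<in> stab I f"
  obtain cp where cp: "papp I p f = (\<lambda>t. cp * f t)" using stab_eig[OF p] by blast
  obtain cq where cq: "papp I q f = (\<lambda>t. cq * f t)" using stab_eig[OF q] by blast
  let ?k = "sg I (\<lambda>i. snd (p i) \<and> fst (q i))"
  have "\<forall>t. papp I (padd p q) f t = (?k * cq * cp) * f t"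
  proof
    fix t
    have "papp I p (papp I q f) t = ?k * papp I (padd p q) f t" by (rule papp_comp)
    hence "?k * papp I p (papp I q f) t = (?k * ?k) * papp I (padd p q) f t" by (simp add: mult.assoc)
    hence "papp I (padd p q) f t = ?k * papp I p (papp I q f) t" unfolding sg_sq by simp
    also have "\<dots> = ?k * (cq * (cp * f t))" unfolding cq papp_lin cp by simp
    finally show "papp I (padd p q) f t = (?k * cq * cp) * f t" by simp
  qed
  moreover have "padd p q \<in> VI I" using p q by (auto simp: stab_def padd_VI)
  ultimately show "padd p q \<in> stab I f" by (auto simp: stab_def)
qed

lemma kappa_sympl: "sg I (\<lambda>i. snd (p i) \<and> fst (q i)) * sg I (\<lambda>i. snd (q i) \<and> fst (p i)) = sympl I p q"
  unfolding sympl_def sg_xor[symmetric] by (rule sg_cong) (auto simp: om1_def)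

lemma stab_iso:
  assumes "f t0 \<noteq> 0" "p \<in> stab I f" "q \<in> stab I f"
  shows "sympl I p q = 1"
proof (rule ccontr)
  assume ne: "sympl I p q \<noteq> 1"
  let ?k1 = "sg I (\<lambda>i. snd (p i) \<and> fst (q i))" and ?k2 = "sg I (\<lambda>i. snd (q i) \<and> fst (p i))"
  have "?k1 \<noteq> ?k2"
  proof
    assume "?k1 = ?k2" hence "?k1 * ?k2 = 1" using sg_sq[of I "\<lambda>i. snd (q i) \<and> fst (p i)"] by simp
    thus False using ne kappa_sympl[of I p q] by simp
  qed
  obtain cp where cp: "papp I p f = (\<lambda>t. cp * f t)" using stab_eig[OF assms(2)] by blast
  obtain cq where cq: "papp I q f = (\<lambda>t. cq * f t)" using stab_eig[OF assms(3)] by blast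
  have e1: "cp * cq * f t = ?k1 * papp I (padd p q) f t" for t
    using papp_comp[of I p q f t] unfolding cq papp_lin cp by (simp add: algebra_simps)
  have e2: "cp * cq * f t = ?k2 * papp I (padd p q) f t" for t
    using papp_comp[of I q p f t] unfolding cp papp_lin cq padd_comm[of q p] by (simp add: algebra_simps)
  have "papp I (padd p q) f t = 0" for t using e1[of t] e2[of t] \<open>?k1 \<noteq> ?k2\<close> by auto
  hence "cp * cq = 0" using e1[of t0] assms(1) by simp
  hence "cp = 0 \<or> cq = 0" by simp
  moreover have "cp \<noteq> 0"
  proof
    assume "cp = 0"
    hence "papp I p (papp I p f) t0 = 0" unfolding cp by (simp add: papp_def)
    moreover have "papp I p (papp I p f) t0 = sg I (\<lambda>i. snd (p i) \<and> fst (p i)) * f t0" using papp_comp[of I p p f t0] by simp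
    ultimately show False using assms(1) sg_nz by auto
  qed
  moreover have "cq \<noteq> 0"
  proof
    assume "cq = 0"
    hence "papp I q (papp I q f) t0 = 0" unfolding cq by (simp add: papp_def)
    moreover have "papp I q (papp I q f) t0 = sg I (\<lambda>i. snd (q i) \<and> fst (q i)) * f t0" using papp_comp[of I q q f t0] by simp
    ultimately show False using assms(1) sg_nz by auto
  qed
  ultimately show False by blast
qed

lemma good_scale: "good I f \<Longrightarrow> good I (\<lambda>t. c * f t)"
  unfolding good_def stab_def by (force simp: papp_lin)




lemma VI_mono: "I \<subseteq> J \<Longrightarrow> VI I \<subseteq> VI J" by (auto simp: VI_def)
lemma subgrp_mono: "subgrp I U \<Longrightarrow> I \<subseteq> J \<Longrightarrow> subgrp J U"
  unfolding subgrp_def using VI_mono by blast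

lemma om1_zero[simp]: "om1 (False,False) b = False" "om1 b (False,False) = False"
  by (auto simp: om1_def)

lemma sympl_sub:
  assumes "finite J" "I \<subseteq> J" "p \<in> VI I"
  shows "sympl J p q = sympl I p q"
proof -
  have "sympl J p q = sg (J - I) (\<lambda>i. om1 (p i) (q i)) * sg I (\<lambda>i. om1 (p i) (q i))"
    unfolding sympl_def by (rule sg_split[OF assms(1,2)])
  also have "sg (J - I) (\<lambda>i. om1 (p i) (q i)) = 1"
    by (rule sg_false) (use assms(3) in \<open>auto simp: VI_def\<close>)
  finally show ?thesis by (simp add: sympl_def)
qed

lemma sympl_disj:
  assumes "p \<in> VI I" "q \<in> VI J" "I \<inter> J = {}"
  shows "sympl K p q = 1"
  unfolding sympl_def
proof (rule sg_false)
  fix i assume "i \<in> K"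
  show "\<not> om1 (p i) (q i)"
  proof (cases "i \<in> I")
    case True hence "i \<notin> J" using assms(3) by blast
    hence "q i = (False,False)" using assms(2) by (auto simp: VI_def)
    thus ?thesis by simp
  next
    case False hence "p i = (False,False)" using assms(1) by (auto simp: VI_def)
    thus ?thesis by simp
  qed
qed

lemma locD: "loc I f \<Longrightarrow> (\<And>i. i \<in> I \<Longrightarrow> t i = t' i) \<Longrightarrow> f t = f t'"
  unfolding loc_def by blast

lemma padd_left_zero: "q i = (False,False) \<Longrightarrow> padd p q i = p i"
  by (simp add: padd_def)
lemma padd_right_zero: "p i = (False,False) \<Longrightarrow> padd p q i = q i"
  by (simp add: padd_def)

lemma papp_prod:
  assumes fin: "finite I" "finite J" and disj: "I \<inter> J = {}"
    and a: "a \<in> VI I" and b: "b \<in> VI J" and lf: "loc I f" and lg: "loc J g"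
  shows "papp (I \<union> J) (padd a b) (\<lambda>t. f t * g t) t = papp I a f t * papp J b g t"
proof -
  let ?P = "\<lambda>i. snd (padd a b i) \<and> (t i \<noteq> fst (padd a b i))"
  have ab_I: "padd a b i = a i" if "i \<in> I" for i
    using that disj b by (intro padd_left_zero) (auto simp: VI_def)
  have ab_J: "padd a b i = b i" if "i \<in> J" for i
    using that disj a by (intro padd_right_zero) (auto simp: VI_def)
  have "sg (I \<union> J) ?P = sg I ?P * sg J ?P"
    unfolding sg_def by (rule prod.union_disjoint[OF fin disj])
  also have "sg I ?P = sg I (\<lambda>i. snd (a i) \<and> (t i \<noteq> fst (a i)))" by (rule sg_cong) (simp add: ab_I)
  also have "sg J ?P = sg J (\<lambda>i. snd (b i) \<and> (t i \<noteq> fst (b i)))" by (rule sg_cong) (simp add: ab_J)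
  finally have s: "sg (I \<union> J) ?P = sg I (\<lambda>i. snd (a i) \<and> (t i \<noteq> fst (a i))) * sg J (\<lambda>i. snd (b i) \<and> (t i \<noteq> fst (b i)))" .
  have ff: "f (flp (I \<union> J) (padd a b) t) = f (flp I a t)"
    by (rule locD[OF lf]) (auto simp: flp_def ab_I)
  have gg: "g (flp (I \<union> J) (padd a b) t) = g (flp J b t)"
    by (rule locD[OF lg]) (auto simp: flp_def ab_J)
  show ?thesis unfolding papp_def s ff gg by (simp add: algebra_simps)
qed

lemma loc_prod: "loc I f \<Longrightarrow> loc J g \<Longrightarrow> loc (I \<union> J) (\<lambda>t. f t * g t)"
  unfolding loc_def by (metis UnCI)

lemma good_prod:
  assumes fin: "finite I" "finite J" and disj: "I \<inter> J = {}"
    and gf: "good I f" and gg: "good J g" and lf: "loc I f" and lg: "loc J g"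
  shows "good (I \<union> J) (\<lambda>t. f t * g t)"
proof -
  obtain Sf where Sf: "lag I Sf" "Sf \<subseteq> stab I f" using gf by (auto simp: good_def)
  obtain Sg where Sg: "lag J Sg" "Sg \<subseteq> stab J g" using gg by (auto simp: good_def)
  have sgf: "subgrp I Sf" and sgg: "subgrp J Sg" using Sf Sg by (auto simp: lag_def)
  have pf: "perp I Sf = Sf" and pg: "perp J Sg = Sg" using Sf Sg by (auto simp: lag_def)
  have SfV: "Sf \<subseteq> VI I" and SgV: "Sg \<subseteq> VI J" using sgf sgg by (auto simp: subgrp_def)
  have pzf: "pz \<in> Sf" and pzg: "pz \<in> Sg" using sgf sgg by (auto simp: subgrp_def)
  have finU: "finite (I \<union> J)" using fin by simp
  let ?S = "ssum Sf Sg"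
  have sub: "subgrp (I \<union> J) ?S"
    by (rule ssum_subgrp[OF subgrp_mono[OF sgf] subgrp_mono[OF sgg]]) auto
  have isoF: "sympl I a a' = 1" if "a \<in> Sf" "a' \<in> Sf" for a a'
    using that pf by (auto simp: perp_def)
  have isoG: "sympl J a a' = 1" if "a \<in> Sg" "a' \<in> Sg" for a a'
    using that pg by (auto simp: perp_def)
  have "perp (I \<union> J) ?S = ?S"
  proof
    show "perp (I \<union> J) ?S \<subseteq> ?S"
    proof
      fix r assume r: "r \<in> perp (I \<union> J) ?S"
      hence rV: "r \<in> VI (I \<union> J)" by (simp add: perp_def)
      define rI where "rI = (\<lambda>i. if i \<in> I then r i else (False,False))"
      define rJ where "rJ = (\<lambda>i. if i \<in> J then r i else (False,False))"
      have rIV: "rI \<in> VI I" and rJV: "rJ \<in> VI J" by (auto simp: rI_def rJ_def VI_def)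
      have req: "r = padd rI rJ"
      proof
        fix i show "r i = padd rI rJ i"
          using rV disj by (cases "i \<in> I"; cases "i \<in> J") (auto simp: rI_def rJ_def padd_def VI_def)
      qed
      have "rI \<in> perp I Sf"
      proof -
        have "sympl I rI a = 1" if a: "a \<in> Sf" for a
        proof -
          have "padd a pz \<in> ?S" unfolding ssum_def using a pzg by blast
          hence "sympl (I \<union> J) r a = 1" using r by (simp add: perp_def)
          hence "sympl (I \<union> J) rI a * sympl (I \<union> J) rJ a = 1" unfolding req sympl_add1 .
          moreover have "sympl (I \<union> J) rJ a = 1" using sympl_disj[OF rJV _ , of a I] a SfV disj by blast
          moreover have "sympl (I \<union> J) rI a = sympl I rI a" by (rule sympl_sub[OF finU _ rIV]) auto
          ultimately show ?thesis by simp
        qed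
        thus ?thesis using rIV by (simp add: perp_def)
      qed
      moreover have "rJ \<in> perp J Sg"
      proof -
        have "sympl J rJ a = 1" if a: "a \<in> Sg" for a
        proof -
          have "padd pz a \<in> ?S" unfolding ssum_def using a pzf by blast
          hence "sympl (I \<union> J) r a = 1" using r by (simp add: perp_def)
          hence "sympl (I \<union> J) rI a * sympl (I \<union> J) rJ a = 1" unfolding req sympl_add1 .
          moreover have "sympl (I \<union> J) rI a = 1" using sympl_disj[OF rIV _ , of a J] a SgV disj by blast
          moreover have "sympl (I \<union> J) rJ a = sympl J rJ a" by (rule sympl_sub[OF finU _ rJV]) auto
          ultimately show ?thesis by simp
        qed
        thus ?thesis using rJV by (simp add: perp_def)
      qed
      ultimately show "r \<in> ?S" unfolding req ssum_def pf pg by blast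
    qed
    show "?S \<subseteq> perp (I \<union> J) ?S"
    proof
      fix s assume s: "s \<in> ?S"
      then obtain a b where ab: "s = padd a b" "a \<in> Sf" "b \<in> Sg" by (auto simp: ssum_def)
      have sV: "s \<in> VI (I \<union> J)" using s sub by (auto simp: subgrp_def)
      have "sympl (I \<union> J) s s' = 1" if s': "s' \<in> ?S" for s'
      proof -
        obtain a' b' where ab': "s' = padd a' b'" "a' \<in> Sf" "b' \<in> Sg" using s' by (auto simp: ssum_def)
        have 1: "sympl (I \<union> J) a a' = 1" using sympl_sub[OF finU _ , of I a a'] ab ab' SfV isoF by auto
        have 2: "sympl (I \<union> J) b b' = 1" using sympl_sub[OF finU _ , of J b b'] ab ab' SgV isoG by auto
        have 3: "sympl (I \<union> J) a b' = 1" using sympl_disj[of a I b' J] ab ab' SfV SgV disj by blast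
        have 4: "sympl (I \<union> J) b a' = 1" using sympl_disj[of b J a' I] ab ab' SfV SgV disj by blast
        show ?thesis unfolding ab ab' sympl_add1 sympl_add2 1 2 3 4 by simp
      qed
      thus "s \<in> perp (I \<union> J) ?S" using sV by (simp add: perp_def)
    qed
  qed
  moreover have "?S \<subseteq> stab (I \<union> J) (\<lambda>t. f t * g t)"
  proof
    fix s assume s: "s \<in> ?S"
    then obtain a b where ab: "s = padd a b" "a \<in> Sf" "b \<in> Sg" by (auto simp: ssum_def)
    obtain ca where ca: "papp I a f = (\<lambda>t. ca * f t)" using stab_eig ab Sf by blast
    obtain cb where cb: "papp J b g = (\<lambda>t. cb * g t)" using stab_eig ab Sg by blast
    have "papp (I \<union> J) s (\<lambda>t. f t * g t) t = (ca * cb) * (f t * g t)" for t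
    proof -
      have "papp (I \<union> J) (padd a b) (\<lambda>t. f t * g t) t = papp I a f t * papp J b g t"
        by (rule papp_prod[OF fin disj _ _ lf lg]) (use ab SfV SgV in auto)
      thus ?thesis unfolding ab(1) ca cb by simp
    qed
    moreover have "s \<in> VI (I \<union> J)" using s sub by (auto simp: subgrp_def)
    ultimately show "s \<in> stab (I \<union> J) (\<lambda>t. f t * g t)" by (auto simp: stab_def)
  qed
  ultimately show ?thesis using sub by (auto simp: good_def lag_def)
qed

definition lift :: "('a \<Rightarrow> 'b) \<Rightarrow> 'a set \<Rightarrow> ('a \<Rightarrow> bool \<times> bool) \<Rightarrow> 'b \<Rightarrow> bool \<times> bool" where
  "lift \<mu> I p = (\<lambda>j. if j \<in> \<mu> ` I then p (inv_into I \<mu> j) else (False,False))"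

lemma lift_at: "inj_on \<mu> I \<Longrightarrow> i \<in> I \<Longrightarrow> lift \<mu> I p (\<mu> i) = p i"
  by (simp add: lift_def)

lemma lift_VI: "lift \<mu> I p \<in> VI (\<mu> ` I)" by (auto simp: lift_def VI_def)
lemma lift_pz: "lift \<mu> I pz = pz" by (auto simp: lift_def pz_def)
lemma lift_add: "lift \<mu> I (padd p q) = padd (lift \<mu> I p) (lift \<mu> I q)"
  by (auto simp: lift_def padd_def fun_eq_iff)

lemma sg_reindex: "inj_on \<mu> I \<Longrightarrow> sg (\<mu> ` I) P = sg I (\<lambda>i. P (\<mu> i))"
  unfolding sg_def by (simp add: prod.reindex)

lemma sympl_lift: "inj_on \<mu> I \<Longrightarrow> sympl (\<mu> ` I) (lift \<mu> I p) (lift \<mu> I q) = sympl I p q"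
  unfolding sympl_def by (simp add: sg_reindex lift_at cong: sg_cong)

lemma papp_lift:
  assumes inj: "inj_on \<mu> I" and lf: "loc I f"
  shows "papp (\<mu> ` I) (lift \<mu> I a) (\<lambda>t. f (t \<circ> \<mu>)) t = papp I a f (t \<circ> \<mu>)"
proof -
  have s: "sg (\<mu> ` I) (\<lambda>j. snd (lift \<mu> I a j) \<and> (t j \<noteq> fst (lift \<mu> I a j)))
      = sg I (\<lambda>i. snd (a i) \<and> ((t \<circ> \<mu>) i \<noteq> fst (a i)))"
    by (simp add: sg_reindex[OF inj] lift_at[OF inj] cong: sg_cong)
  have "f (flp (\<mu> ` I) (lift \<mu> I a) t \<circ> \<mu>) = f (flp I a (t \<circ> \<mu>))"
    by (rule locD[OF lf]) (auto simp: flp_def lift_at[OF inj])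
  thus ?thesis unfolding papp_def s by simp
qed

lemma loc_relabel: "loc I f \<Longrightarrow> loc (\<mu> ` I) (\<lambda>t. f (t \<circ> \<mu>))"
  unfolding loc_def by (metis comp_apply imageI)

lemma good_relabel:
  assumes fin: "finite I" and inj: "inj_on \<mu> I" and gf: "good I f" and lf: "loc I f"
  shows "good (\<mu> ` I) (\<lambda>t. f (t \<circ> \<mu>))"
proof -
  obtain S where S: "lag I S" "S \<subseteq> stab I f" using gf by (auto simp: good_def)
  have sg: "subgrp I S" and pS: "perp I S = S" using S by (auto simp: lag_def)
  let ?S = "lift \<mu> I ` S"
  have sub: "subgrp (\<mu> ` I) ?S"
    unfolding subgrp_def
  proof (intro conjI ballI)
    show "?S \<subseteq> VI (\<mu> ` I)" using lift_VI by blast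
    show "pz \<in> ?S" using sg lift_pz by (metis image_eqI subgrp_def)
    fix p q assume "p \<in> ?S" "q \<in> ?S"
    then obtain p0 q0 where "p = lift \<mu> I p0" "q = lift \<mu> I q0" "p0 \<in> S" "q0 \<in> S" by blast
    thus "padd p q \<in> ?S" using sg by (auto simp: lift_add[symmetric] subgrp_def)
  qed
  have "perp (\<mu> ` I) ?S = ?S"
  proof
    show "perp (\<mu> ` I) ?S \<subseteq> ?S"
    proof
      fix r assume r: "r \<in> perp (\<mu> ` I) ?S"
      hence rV: "r \<in> VI (\<mu> ` I)" by (simp add: perp_def)
      define r' where "r' = (\<lambda>i. if i \<in> I then r (\<mu> i) else (False,False))"
      have r'V: "r' \<in> VI I" by (auto simp: r'_def VI_def)
      have lr: "lift \<mu> I r' = r"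
      proof
        fix j show "lift \<mu> I r' j = r j"
        proof (cases "j \<in> \<mu> ` I")
          case True
          then obtain i where "i \<in> I" "j = \<mu> i" by blast
          thus ?thesis using inj by (simp add: lift_at r'_def)
        next
          case False thus ?thesis using rV by (auto simp: lift_def VI_def)
        qed
      qed
      have "sympl I r' a = 1" if "a \<in> S" for a
        using r that lr sympl_lift[OF inj, of r' a] by (auto simp: perp_def)
      hence "r' \<in> perp I S" using r'V by (simp add: perp_def)
      thus "r \<in> ?S" using pS lr by blast
    qed
    show "?S \<subseteq> perp (\<mu> ` I) ?S"
    proof
      fix s assume "s \<in> ?S"
      then obtain a where a: "s = lift \<mu> I a" "a \<in> S" by blast
      have "sympl (\<mu> ` I) s s' = 1" if s'S: "s' \<in> ?S" for s'
      proof -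
        obtain b where "s' = lift \<mu> I b" "b \<in> S" using s'S by blast
        thus ?thesis using a sympl_lift[OF inj, of a b] pS by (auto simp: perp_def)
      qed
      thus "s \<in> perp (\<mu> ` I) ?S" using lift_VI a by (simp add: perp_def)
    qed
  qed
  moreover have "?S \<subseteq> stab (\<mu> ` I) (\<lambda>t. f (t \<circ> \<mu>))"
  proof
    fix s assume "s \<in> ?S"
    then obtain a where a: "s = lift \<mu> I a" "a \<in> S" by blast
    obtain c where c: "papp I a f = (\<lambda>t. c * f t)" using stab_eig a S by blast
    have "papp (\<mu> ` I) s (\<lambda>t. f (t \<circ> \<mu>)) t = c * f (t \<circ> \<mu>)" for t
      unfolding a papp_lift[OF inj lf] c by simp
    thus "s \<in> stab (\<mu> ` I) (\<lambda>t. f (t \<circ> \<mu>))" using lift_VI a by (auto simp: stab_def)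
  qed
  ultimately show ?thesis using sub by (auto simp: good_def lag_def)
qed




lemma prod_invol:
  fixes h :: "'v \<Rightarrow> 'a::comm_ring_1"
  assumes "finite K" "\<And>i. i \<in> K \<Longrightarrow> part i \<in> K \<and> part i \<noteq> i \<and> part (part i) = i"
    "\<And>i. i \<in> K \<Longrightarrow> h (part i) = h i" "\<And>i. i \<in> K \<Longrightarrow> h i * h i = 1"
  shows "prod h K = 1"
  using assms
proof (induction "card K" arbitrary: K rule: less_induct)
  case less
  show ?case
  proof (cases "K = {}")
    case True thus ?thesis by simp
  next
    case False
    then obtain i where i: "i \<in> K" by blast
    let ?K' = "K - {i} - {part i}"
    have pi: "part i \<in> K - {i}" using less.prems(2)[OF i] i by auto
    have "prod h K = h i * prod h (K - {i})" using prod.remove[OF less.prems(1) i] .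
    also have "prod h (K - {i}) = h (part i) * prod h ?K'" using prod.remove[OF _ pi] less.prems(1) by simp
    also have "prod h ?K' = 1"
    proof (rule less.hyps)
      show "card ?K' < card K" using i pi less.prems(1) by (meson Diff_subset card_Diff1_less dual_order.strict_trans1 card_mono finite_Diff)
      show "finite ?K'" using less.prems(1) by simp
      fix j assume j: "j \<in> ?K'"
      have "part j \<noteq> i" using j less.prems(2) i by (metis DiffD1 DiffD2 singletonI)
      moreover have "part j \<noteq> part i" using j less.prems(2) i by (metis DiffD1 DiffD2 singletonI)
      ultimately show "part j \<in> ?K' \<and> part j \<noteq> j \<and> part (part j) = j" using j less.prems(2) by auto
      show "h (part j) = h j" using j less.prems(3) by simp
      show "h j * h j = 1" using j less.prems(4) by simp
    qed
    finally show ?thesis using less.prems(3)[OF i] less.prems(4)[OF i] by (simp add: mult.assoc[symmetric])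
  qed
qed

lemma sg_invol:
  assumes "finite K" "\<And>i. i \<in> K \<Longrightarrow> part i \<in> K \<and> part i \<noteq> i \<and> part (part i) = i"
    "\<And>i. i \<in> K \<Longrightarrow> P (part i) = P i"
  shows "sg K P = 1"
  unfolding sg_def by (rule prod_invol[OF assms(1,2)]) (use assms(3) in auto)

lemma sg_two:
  assumes "finite I" "i \<in> I" "k \<in> I" "i \<noteq> k" "\<And>j. j \<in> I \<Longrightarrow> j \<noteq> i \<Longrightarrow> j \<noteq> k \<Longrightarrow> \<not> P j"
  shows "sg I P = (if P i then -1 else 1) * (if P k then -1 else 1)"
proof -
  have "sg I P = (if P i then -1 else 1) * sg (I - {i}) P"
    unfolding sg_def by (rule prod.remove[OF assms(1,2)])
  also have "sg (I - {i}) P = (if P k then -1 else 1)"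
    by (rule sg_single) (use assms in auto)
  finally show ?thesis .
qed

definition ovr :: "'v set \<Rightarrow> ('v \<Rightarrow> bool) \<Rightarrow> ('v \<Rightarrow> bool) \<Rightarrow> 'v \<Rightarrow> bool" where
  "ovr C t a = (\<lambda>i. if i \<in> C then a i else t i)"
definition DD :: "'v set \<Rightarrow> 'v set \<Rightarrow> ('v \<Rightarrow> 'v) \<Rightarrow> ('v \<Rightarrow> bool) set" where
  "DD C Cph part = {a. (\<forall>i. i \<notin> C \<longrightarrow> \<not> a i) \<and> (\<forall>i\<in>C - Cph. a (part i) = a i)}"
definition contr :: "'v set \<Rightarrow> 'v set \<Rightarrow> ('v \<Rightarrow> 'v) \<Rightarrow> (('v \<Rightarrow> bool) \<Rightarrow> complex) \<Rightarrow> ('v \<Rightarrow> bool) \<Rightarrow> complex" where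
  "contr C Cph part f = (\<lambda>t. \<Sum>a\<in>DD C Cph part. f (ovr C t a))"

lemma finite_DD: "finite C \<Longrightarrow> finite (DD C Cph part)"
proof -
  assume fC: "finite C"
  have "DD C Cph part \<subseteq> (\<lambda>X i. i \<in> X) ` Pow C"
  proof
    fix a assume a: "a \<in> DD C Cph part"
    have "a = (\<lambda>i. i \<in> {i \<in> C. a i})" using a by (auto simp: DD_def fun_eq_iff)
    thus "a \<in> (\<lambda>X i. i \<in> X) ` Pow C" by blast
  qed
  thus ?thesis using fC by (meson finite_Pow_iff finite_imageI finite_subset)
qed

lemma loc_contr: "loc I f \<Longrightarrow> loc (I - C) (contr C Cph part f)"
  unfolding loc_def contr_def
proof (intro allI impI)
  fix t t' :: "'a \<Rightarrow> bool" assume lf: "\<forall>t t'. (\<forall>i\<in>I. t i = t' i) \<longrightarrow> f t = f t'" and h: "\<forall>i\<in>I - C. t i = t' i"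
  show "(\<Sum>a\<in>DD C Cph part. f (ovr C t a)) = (\<Sum>a\<in>DD C Cph part. f (ovr C t' a))"
    by (rule sum.cong) (use lf h in \<open>auto simp: ovr_def\<close>)
qed

locale contr_ctx =
  fixes I C Cph :: "'v set" and part :: "'v \<Rightarrow> 'v"
  assumes finI: "finite I" and CI: "C \<subseteq> I" and CphC: "Cph \<subseteq> C"
    and pin: "\<And>i. i \<in> C - Cph \<Longrightarrow> part i \<in> C - Cph \<and> part i \<noteq> i \<and> part (part i) = i"
begin

definition W where "W = {p \<in> VI I. (\<forall>i\<in>Cph. \<not> snd (p i)) \<and> (\<forall>i\<in>C - Cph. p (part i) = p i)}"
definition clr where "clr p = (\<lambda>i. if i \<in> C then (False,False) else p i)"

lemma finC: "finite C" using finI CI finite_subset by blast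

lemma W_subgrp: "subgrp I W"
  unfolding subgrp_def W_def using padd_VI[of _ I] pz_VI[of I] by (auto simp: pz_def padd_def)

lemma clr_add: "clr (padd p q) = padd (clr p) (clr q)" by (auto simp: clr_def padd_def fun_eq_iff)
lemma clr_pz: "clr pz = pz" by (auto simp: clr_def pz_def)

lemma sgC_W:
  assumes "\<And>i. i \<in> Cph \<Longrightarrow> \<not> P i" "\<And>i. i \<in> C - Cph \<Longrightarrow> P (part i) = P i"
  shows "sg C P = 1"
proof -
  have "sg C P = sg (C - Cph) P * sg Cph P" by (rule sg_split[OF finC CphC])
  also have "sg Cph P = 1" by (rule sg_false) (use assms in auto)
  also have "sg (C - Cph) P = 1" by (rule sg_invol[where part=part]) (use finC pin assms in auto)
  finally show ?thesis by simp
qed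

lemma perpW:
  assumes u: "u \<in> perp I W"
  shows "u \<in> W" "\<And>i. i \<notin> C \<Longrightarrow> u i = (False,False)"
proof -
  have uV: "u \<in> VI I" and uW: "\<And>w. w \<in> W \<Longrightarrow> sympl I u w = 1" using u by (auto simp: perp_def)
  have single: "sympl I u (pz(i := v)) = (if om1 (u i) v then -1 else 1)" if "i \<in> I" for i v
    unfolding sympl_def by (subst sg_single[OF finI that]) (auto simp: pz_def)
  have om_T: "om1 a (True,False) = snd a" and om_F: "om1 a (False,True) = fst a" for a
    by (auto simp: om1_def)
  have pv: "part j \<noteq> i" if "j \<in> C - Cph" "i \<notin> C" for i j using pin[OF that(1)] that by auto
  show off: "u i = (False,False)" if "i \<notin> C" for i
  proof (cases "i \<in> I")
    case False thus ?thesis using uV by (auto simp: VI_def)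
  next
    case True
    have "pz(i := (True,False)) \<in> W" "pz(i := (False,True)) \<in> W"
      using True that pv CphC pin by (auto simp: W_def VI_def pz_def)
    hence "sympl I u (pz(i := (True,False))) = 1" "sympl I u (pz(i := (False,True))) = 1" using uW by auto
    hence "\<not> snd (u i)" "\<not> fst (u i)" unfolding single[OF True] om_T om_F by (auto split: if_splits)
    thus ?thesis by (simp add: prod_eq_iff)
  qed
  have ph: "\<not> snd (u i)" if "i \<in> Cph" for i
  proof -
    have iI: "i \<in> I" using that CphC CI by auto
    have "pz(i := (True,False)) \<in> W"
    proof -
      have "\<forall>j\<in>C - Cph. (pz(i := (True,False))) (part j) = (pz(i := (True,False))) j"
        using that pin by (auto simp: pz_def)
      thus ?thesis using iI by (auto simp: W_def VI_def pz_def)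
    qed
    hence "sympl I u (pz(i := (True,False))) = 1" using uW by auto
    thus ?thesis unfolding single[OF iI] om_T by (auto split: if_splits)
  qed
  have pr: "u (part i) = u i" if i: "i \<in> C - Cph" for i
  proof -
    have pi: "part i \<in> C - Cph" "part i \<noteq> i" "part (part i) = i" using pin[OF i] by auto
    have iI: "i \<in> I" "part i \<in> I" using i pi CI by auto
    have two: "sympl I u (pz(i := v, part i := v)) = (if om1 (u i) v then -1 else 1) * (if om1 (u (part i)) v then -1 else 1)" for v
      unfolding sympl_def by (subst sg_two[OF finI iI(1) iI(2)]) (use pi in \<open>auto simp: pz_def\<close>)
    have inW: "pz(i := v, part i := v) \<in> W" if "fst v \<or> \<not> snd v" "\<not> snd v" for v
    proof -
      have "\<forall>j\<in>C - Cph. (pz(i := v, part i := v)) (part j) = (pz(i := v, part i := v)) j"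
      proof
        fix j assume j: "j \<in> C - Cph"
        show "(pz(i := v, part i := v)) (part j) = (pz(i := v, part i := v)) j"
          using pin[OF j] pi j by (cases "j = i"; cases "j = part i") (auto simp: pz_def)
      qed
      moreover have "\<forall>j\<in>Cph. \<not> snd ((pz(i := v, part i := v)) j)" using that by (auto simp: pz_def)
      ultimately show ?thesis using iI by (auto simp: W_def VI_def pz_def)
    qed
    have inW2: "pz(i := (False,True), part i := (False,True)) \<in> W \<or> True" by simp
    have e1: "sympl I u (pz(i := (True,False), part i := (True,False))) = 1" using uW inW[of "(True,False)"] by auto
    hence "snd (u i) = snd (u (part i))" unfolding two om_T by (auto split: if_splits)
    moreover have "fst (u i) = fst (u (part i))"
    proof -
      have "pz(i := (False,True), part i := (False,True)) \<in> W"
      proof -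
        have "\<forall>j\<in>C - Cph. (pz(i := (False,True), part i := (False,True))) (part j) = (pz(i := (False,True), part i := (False,True))) j"
        proof
          fix j assume j: "j \<in> C - Cph"
          show "(pz(i := (False,True), part i := (False,True))) (part j) = (pz(i := (False,True), part i := (False,True))) j"
            using pin[OF j] pi j by (cases "j = i"; cases "j = part i") (auto simp: pz_def)
        qed
        moreover have "\<forall>j\<in>Cph. \<not> snd ((pz(i := (False,True), part i := (False,True))) j)"
          using i pi by (auto simp: pz_def)
        ultimately show ?thesis using iI by (auto simp: W_def VI_def pz_def)
      qed
      hence "sympl I u (pz(i := (False,True), part i := (False,True))) = 1" using uW by auto
      thus ?thesis unfolding two om_F by (auto split: if_splits)
    qed
    ultimately show ?thesis by (simp add: prod_eq_iff)
  qed
  show "u \<in> W" using uV ph pr by (auto simp: W_def)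
qed

lemma clr_VI: "p \<in> VI I \<Longrightarrow> clr p \<in> VI (I - C)" by (auto simp: clr_def VI_def)

theorem good_contr:
  assumes gf: "good I f" and lf: "loc I f"
  shows "good (I - C) (contr C Cph part f)"
proof -
  obtain S where S: "lag I S" "S \<subseteq> stab I f" using gf by (auto simp: good_def)
  have sgS: "subgrp I S" and pS: "perp I S = S" using S by (auto simp: lag_def)
  have SV: "S \<subseteq> VI I" using sgS by (simp add: subgrp_def)
  have sgW: "subgrp I W" by (rule W_subgrp)
  let ?T = "S \<inter> W"
  let ?S' = "clr ` ?T"
  have sub: "subgrp (I - C) ?S'"
    unfolding subgrp_def
  proof (intro conjI ballI)
    show "?S' \<subseteq> VI (I - C)" using SV clr_VI by blast
    have "pz \<in> ?T" using sgS sgW by (auto simp: subgrp_def)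
    thus "pz \<in> ?S'" using clr_pz by (metis image_eqI)
    fix p q assume "p \<in> ?S'" "q \<in> ?S'"
    then obtain a b where ab: "p = clr a" "q = clr b" "a \<in> ?T" "b \<in> ?T" by blast
    have "padd a b \<in> ?T" using ab sgS sgW by (auto simp: subgrp_def)
    thus "padd p q \<in> ?S'" unfolding ab clr_add[symmetric] by blast
  qed
  have iso: "sympl (I - C) (clr a) (clr b) = 1" if a: "a \<in> ?T" and b: "b \<in> ?T" for a b
  proof -
    have aW: "a \<in> W" and bW: "b \<in> W" using a b by auto
    have "sympl I a b = 1" using a b pS by (auto simp: perp_def)
    moreover have "sympl I a b = sg (I - C) (\<lambda>i. om1 (a i) (b i)) * sg C (\<lambda>i. om1 (a i) (b i))"
      unfolding sympl_def by (rule sg_split[OF finI CI])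
    moreover have "sg C (\<lambda>i. om1 (a i) (b i)) = 1"
      by (rule sgC_W) (use aW bW in \<open>auto simp: W_def om1_def\<close>)
    moreover have "sympl (I - C) (clr a) (clr b) = sg (I - C) (\<lambda>i. om1 (a i) (b i))"
      unfolding sympl_def by (rule sg_cong) (simp add: clr_def)
    ultimately show ?thesis by simp
  qed
  have perp_sub: "perp (I - C) ?S' \<subseteq> ?S'"
  proof
    fix y assume y: "y \<in> perp (I - C) ?S'"
    have yV: "y \<in> VI (I - C)" using y by (simp add: perp_def)
    have yVI: "y \<in> VI I" using yV VI_mono[of "I - C" I] by blast
    have y0: "y i = (False,False)" if "i \<in> C" for i using yV that by (auto simp: VI_def)
    have "y \<in> perp I ?T"
    proof -
      have "sympl I y s = 1" if s: "s \<in> ?T" for s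
      proof -
        have "sympl I y s = sympl (I - C) y s" by (rule sympl_sub[OF finI _ yV]) auto
        also have "\<dots> = sympl (I - C) y (clr s)" unfolding sympl_def by (rule sg_cong) (simp add: clr_def)
        also have "\<dots> = 1" using y s by (auto simp: perp_def)
        finally show ?thesis .
      qed
      thus ?thesis using yVI by (simp add: perp_def)
    qed
    also have "perp I ?T = ssum S (perp I W)" using perp_inter[OF finI sgS sgW] pS by simp
    finally obtain s u where su: "y = padd s u" "s \<in> S" "u \<in> perp I W" by (auto simp: ssum_def)
    have uW: "u \<in> W" and u0: "\<And>i. i \<notin> C \<Longrightarrow> u i = (False,False)" using perpW[OF su(3)] by auto
    have s_eq: "s = padd y u" using su(1) by simp
    have sC: "s i = u i" if "i \<in> C" for i unfolding s_eq using y0[OF that] by (simp add: padd_def)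
    have sW: "s \<in> W"
    proof -
      have "s \<in> VI I" using su(2) SV by blast
      moreover have "\<forall>i\<in>Cph. \<not> snd (s i)" using uW sC CphC by (auto simp: W_def)
      moreover have "\<forall>i\<in>C - Cph. s (part i) = s i"
      proof
        fix i assume i: "i \<in> C - Cph"
        have "part i \<in> C" using pin[OF i] by auto
        thus "s (part i) = s i" using sC i uW by (auto simp: W_def)
      qed
      ultimately show ?thesis by (simp add: W_def)
    qed
    have "clr s = y"
    proof
      fix i show "clr s i = y i"
      proof (cases "i \<in> C")
        case True thus ?thesis using y0 by (simp add: clr_def)
      next
        case False
        have "s i = y i" unfolding s_eq using u0[OF False] by (simp add: padd_def)
        thus ?thesis using False by (simp add: clr_def)
      qed
    qed
    thus "y \<in> ?S'" using su(2) sW by blast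
  qed
  have lagS': "lag (I - C) ?S'"
  proof -
    have "?S' \<subseteq> perp (I - C) ?S'"
    proof
      fix p assume "p \<in> ?S'"
      then obtain a where a: "p = clr a" "a \<in> ?T" by blast
      have "sympl (I - C) p q = 1" if "q \<in> ?S'" for q using that a iso by auto
      moreover have "p \<in> VI (I - C)" using sub \<open>p \<in> ?S'\<close> by (auto simp: subgrp_def)
      ultimately show "p \<in> perp (I - C) ?S'" by (simp add: perp_def)
    qed
    thus ?thesis using perp_sub sub by (auto simp: lag_def)
  qed
  let ?D = "DD C Cph part"
  have stabS': "?S' \<subseteq> stab (I - C) (contr C Cph part f)"
  proof
    fix s' assume "s' \<in> ?S'"
    then obtain s where s: "s' = clr s" "s \<in> S" "s \<in> W" by blast
    obtain c where c: "papp I s f = (\<lambda>t. c * f t)" using stab_eig s S by blast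
    define \<tau> where "\<tau> a = (\<lambda>i. if i \<in> C then a i \<noteq> fst (s i) else False)" for a
    have \<tau>D: "\<tau> a \<in> ?D" if "a \<in> ?D" for a
    proof -
      have "\<forall>i\<in>C - Cph. \<tau> a (part i) = \<tau> a i"
      proof
        fix i assume i: "i \<in> C - Cph"
        have "part i \<in> C" using pin[OF i] by auto
        thus "\<tau> a (part i) = \<tau> a i" using i that s(3) by (auto simp: \<tau>_def DD_def W_def)
      qed
      thus ?thesis by (auto simp: DD_def \<tau>_def)
    qed
    have \<tau>\<tau>: "\<tau> (\<tau> a) = a" if "a \<in> ?D" for a using that by (auto simp: \<tau>_def DD_def fun_eq_iff)
    have bij: "bij_betw \<tau> ?D ?D" by (rule bij_betw_byWitness[where f'=\<tau>]) (use \<tau>D \<tau>\<tau> in auto)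
    let ?sgn = "\<lambda>t. sg (I - C) (\<lambda>i. snd (clr s i) \<and> (t i \<noteq> fst (clr s i)))"
    have key: "c * f (ovr C t a) = ?sgn t * f (ovr C (flp (I - C) (clr s) t) (\<tau> a))" if a: "a \<in> ?D" for a t
    proof -
      let ?Q = "\<lambda>i. snd (s i) \<and> (ovr C t a i \<noteq> fst (s i))"
      have "c * f (ovr C t a) = papp I s f (ovr C t a)" using c by simp
      also have "\<dots> = sg I ?Q * f (flp I s (ovr C t a))" by (simp add: papp_def)
      also have "sg I ?Q = sg (I - C) ?Q * sg C ?Q" by (rule sg_split[OF finI CI])
      also have "sg C ?Q = 1"
      proof (rule sgC_W)
        show "\<not> ?Q i" if "i \<in> Cph" for i using that s(3) by (auto simp: W_def)
        show "?Q (part i) = ?Q i" if i: "i \<in> C - Cph" for i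
        proof -
          have "part i \<in> C" using pin[OF i] by auto
          thus ?thesis using i a s(3) by (auto simp: W_def DD_def ovr_def)
        qed
      qed
      also have "sg (I - C) ?Q = ?sgn t" by (rule sg_cong) (simp add: ovr_def clr_def)
      also have "flp I s (ovr C t a) = ovr C (flp (I - C) (clr s) t) (\<tau> a)"
        using CI by (auto simp: flp_def ovr_def clr_def \<tau>_def fun_eq_iff)
      finally show ?thesis by simp
    qed
    have "papp (I - C) s' (contr C Cph part f) t = c * contr C Cph part f t" for t
    proof -
      have "c * contr C Cph part f t = (\<Sum>a\<in>?D. c * f (ovr C t a))"
        by (simp add: contr_def sum_distrib_left)
      also have "\<dots> = (\<Sum>a\<in>?D. ?sgn t * f (ovr C (flp (I - C) (clr s) t) (\<tau> a)))"
        by (rule sum.cong) (use key in auto)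
      also have "\<dots> = ?sgn t * (\<Sum>a\<in>?D. f (ovr C (flp (I - C) (clr s) t) (\<tau> a)))"
        by (simp add: sum_distrib_left)
      also have "(\<Sum>a\<in>?D. f (ovr C (flp (I - C) (clr s) t) (\<tau> a))) = (\<Sum>a\<in>?D. f (ovr C (flp (I - C) (clr s) t) a))"
        by (rule sum.reindex_bij_betw[OF bij])
      also have "?sgn t * (\<Sum>a\<in>?D. f (ovr C (flp (I - C) (clr s) t) a)) = papp (I - C) s' (contr C Cph part f) t"
        by (simp add: papp_def contr_def s(1))
      finally show ?thesis by simp
    qed
    moreover have "s' \<in> VI (I - C)" using s SV clr_VI by blast
    ultimately show "s' \<in> stab (I - C) (contr C Cph part f)" by (auto simp: stab_def)
  qed
  show ?thesis using lagS' stabS' by (auto simp: good_def)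
qed

end




lemma sg_card: "finite K \<Longrightarrow> (-1) ^ card {i \<in> K. P i} = sg K P"
proof -
  assume f: "finite K"
  have "sg K P = (\<Prod>i\<in>K \<inter> {i. P i}. -1) * (\<Prod>i\<in>K \<inter> - {i. P i}. 1)"
    unfolding sg_def by (rule prod.If_cases[OF f])
  also have "\<dots> = (-1) ^ card (K \<inter> {i. P i})" by simp
  also have "K \<inter> {i. P i} = {i \<in> K. P i}" by blast
  finally show ?thesis by simp
qed

lemma paulis_VI: "paulis m = VI {0..<m}" by (auto simp: paulis_def VI_def)

lemma pauli_apply_papp: "pauli_apply m p f t = papp {0..<m} p f t"
proof -
  have "{i \<in> {0..<m}. snd (p i) \<and> (t i \<noteq> fst (p i))} = {i \<in> {0..<m}. snd (p i) \<and> (t i \<noteq> fst (p i))}" ..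
  thus ?thesis
    unfolding pauli_apply_def papp_def flp_def
    by (simp add: sg_card[symmetric])
qed

lemma pauli_commute_sympl: "pauli_commute m p q \<longleftrightarrow> sympl {0..<m} p q = 1"
proof -
  have "sympl {0..<m} p q = (-1) ^ card {i \<in> {0..<m}. om1 (p i) (q i)}"
    unfolding sympl_def by (rule sg_card[symmetric]) simp
  moreover have "{i \<in> {0..<m}. om1 (p i) (q i)} = {i \<in> {0..<m}. (fst (p i) \<and> snd (q i)) \<noteq> (snd (p i) \<and> fst (q i))}"
    by (simp add: om1_def)
  moreover have pw: "((-1::complex) ^ k = 1) = even k" for k by (cases "even k") auto
  ultimately show ?thesis unfolding pauli_commute_def by (simp add: pw)
qed

definition A5 :: "tensor \<Rightarrow> (nat \<Rightarrow> bool) \<Rightarrow> complex" where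
  "A5 A = (\<lambda>t. A (t 0) (t 1) (t 2) (t 3) (t 4))"

lemma loc_A5: "loc {0..<5} (A5 A)"
  unfolding loc_def A5_def by simp

lemma good_A5:
  assumes "stabilizer_tensor_51 A"
  shows "good {0..<5} (A5 A)"
proof -
  have st: "stabilizer_state 5 (A5 A)" using assms by (simp add: stabilizer_tensor_51_def A5_def)
  have eq: "{p \<in> paulis 5. \<exists>c. \<forall>t. pauli_apply 5 p (A5 A) t = c * A5 A t} = stab {0..<5} (A5 A)"
    by (simp add: stab_def paulis_VI pauli_apply_papp)
  obtain t0 where t0: "A5 A t0 \<noteq> 0" using st by (auto simp: stabilizer_state_def)
  have c: "card (stab {0..<5} (A5 A)) = 32" using st unfolding stabilizer_state_def eq by simp
  have "lag {0..<5} (stab {0..<5} (A5 A))"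
  proof (rule lag_by_card)
    show "subgrp {0..<5} (stab {0..<5} (A5 A))" by (rule stab_subgrp)
    show "sympl {0..<5} p q = 1" if "p \<in> stab {0..<5} (A5 A)" "q \<in> stab {0..<5} (A5 A)" for p q
      by (rule stab_iso[OF t0 that])
    show "card (stab {0..<5} (A5 A)) * card (stab {0..<5} (A5 A)) = card (VI {0..<(5::nat)})"
      by (simp add: c card_VI)
  qed simp
  thus ?thesis by (auto simp: good_def)
qed

definition LG :: "(nat \<times> nat) set \<Rightarrow> (nat \<times> nat \<times> nat) set" where
  "LG K = {(i, j, l). (i, j) \<in> K \<and> l < 5}"

definition site :: "tensor \<Rightarrow> nat \<Rightarrow> nat \<Rightarrow> (nat \<times> nat \<times> nat \<Rightarrow> bool) \<Rightarrow> complex" where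
  "site A i j = (\<lambda>t. complex_of_real (1 / sqrt 2) * A (t (i,j,0)) (t (i,j,1)) (t (i,j,2)) (t (i,j,3)) (t (i,j,4)))"

lemma LG_single: "LG {(i,j)} = (\<lambda>l. (i,j,l)) ` {0..<5}"
  by (auto simp: LG_def)

lemma good_site:
  assumes "stabilizer_tensor_51 A"
  shows "good (LG {(i,j)}) (site A i j)" "loc (LG {(i,j)}) (site A i j)"
proof -
  have inj: "inj_on (\<lambda>l. (i,j,l)) {0..<(5::nat)}" by (auto simp: inj_on_def)
  have g: "good ((\<lambda>l. (i,j,l)) ` {0..<5}) (\<lambda>t. A5 A (t \<circ> (\<lambda>l. (i,j,l))))"
    by (rule good_relabel[OF _ inj good_A5[OF assms] loc_A5]) simp
  have se: "site A i j = (\<lambda>t. complex_of_real (1 / sqrt 2) * A5 A (t \<circ> (\<lambda>l. (i,j,l))))"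
    by (simp add: site_def A5_def fun_eq_iff)
  show "good (LG {(i,j)}) (site A i j)" unfolding se LG_single by (rule good_scale[OF g])
  show "loc (LG {(i,j)}) (site A i j)" by (auto simp: loc_def site_def LG_def)
qed

definition Psi :: "tensor \<Rightarrow> (nat \<times> nat) set \<Rightarrow> (nat \<times> nat \<times> nat \<Rightarrow> bool) \<Rightarrow> complex" where
  "Psi A K = (\<lambda>t. \<Prod>(i,j)\<in>K. site A i j t)"

lemma finite_LG: "finite K \<Longrightarrow> finite (LG K)"
proof -
  assume "finite K"
  hence "finite (K \<times> {0..<(5::nat)})" by simp
  moreover have "LG K = (\<lambda>((i,j),l). (i,j,l)) ` (K \<times> {0..<5})" by (force simp: LG_def)
  ultimately show ?thesis by simp
qed

lemma good_Psi:
  assumes "stabilizer_tensor_51 A" "finite K"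
  shows "good (LG K) (Psi A K) \<and> loc (LG K) (Psi A K)"
  using assms(2)
proof (induction K rule: finite_induct)
  case empty
  have "lag {} {pz}"
    unfolding lag_def subgrp_def perp_def by (auto simp: VI_def pz_def fun_eq_iff)
  moreover have "{pz} \<subseteq> stab {} (Psi A {})" by (auto simp: stab_def intro: exI[of _ 1])
  moreover have "LG {} = {}" by (simp add: LG_def)
  moreover have "Psi A {} = (\<lambda>_. 1)" by (simp add: Psi_def)
  ultimately show ?case by (auto simp: good_def loc_def)
next
  case (insert x K)
  obtain i j where x: "x = (i,j)" by (cases x)
  have disj: "LG {(i,j)} \<inter> LG K = {}" using insert(2) x by (auto simp: LG_def)
  have un: "LG {(i,j)} \<union> LG K = LG (insert x K)" using x by (auto simp: LG_def)
  have eq: "Psi A (insert x K) = (\<lambda>t. site A i j t * Psi A K t)"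
    using insert(1,2) x by (simp add: Psi_def fun_eq_iff)
  have "good (LG {(i,j)} \<union> LG K) (\<lambda>t. site A i j t * Psi A K t)"
    by (rule good_prod[OF finite_LG finite_LG disj good_site(1)[OF assms(1)]])
       (use insert in \<open>auto simp: good_site(2)[OF assms(1)]\<close>)
  moreover have "loc (LG {(i,j)} \<union> LG K) (\<lambda>t. site A i j t * Psi A K t)"
    by (rule loc_prod) (use insert good_site(2)[OF assms(1)] in auto)
  ultimately show ?case using eq un by simp
qed




definition PP :: "nat \<Rightarrow> nat \<Rightarrow> (nat \<times> nat) set" where "PP n d = {0..<n} \<times> {0..<d}"
definition QQ :: "nat \<Rightarrow> nat \<Rightarrow> (nat \<times> nat) set" where "QQ n d = {0..<n} \<times> {1..<d}"
definition OUTL :: "nat \<Rightarrow> nat \<Rightarrow> (nat \<times> nat \<times> nat) set" where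
  "OUTL n d = {(i,j,l). i < n \<and> ((j = 0 \<and> l = 3) \<or> (j = d - 1 \<and> l = 4))}"
definition CIN :: "nat \<Rightarrow> nat \<Rightarrow> (nat \<times> nat \<times> nat) set" where "CIN n d = LG (PP n d) - OUTL n d"
definition PHY :: "nat \<Rightarrow> nat \<Rightarrow> (nat \<times> nat \<times> nat) set" where
  "PHY n d = {(i,j,l). (i,j) \<in> PP n d \<and> l = 0}"
definition part :: "nat \<Rightarrow> nat \<times> nat \<times> nat \<Rightarrow> nat \<times> nat \<times> nat" where
  "part n = (\<lambda>(i,j,l). if l = 1 then ((i+1) mod n, j, 2) else if l = 2 then ((i+n-1) mod n, j, 1)
     else if l = 3 then (i, j-1, 4) else if l = 4 then (i, j+1, 3) else (i,j,l))"

lemma mod1: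
  fixes i n :: nat assumes i: "i < n" shows "((i+1) mod n + n - 1) mod n = i"
proof (cases "i + 1 = n")
  case True
  have a: "(i+1) mod n = 0" using True by simp
  have b: "0 + n - 1 = i" using True by linarith
  show ?thesis unfolding a b using i by (rule mod_less)
next
  case False
  have a: "(i+1) mod n = i + 1" using False i by (intro mod_less) linarith
  have b: "i + 1 + n - 1 = i + n" by linarith
  show ?thesis unfolding a b using i by simp
qed

lemma mod2:
  fixes i n :: nat assumes i: "i < n" shows "((i+n-1) mod n + 1) mod n = i"
proof (cases "i = 0")
  case True
  have a: "i + n - 1 = n - 1" using True by simp
  have b: "(n - 1) mod n = n - 1" using i by (intro mod_less) linarith
  have c: "n - 1 + 1 = n" using i by linarith
  show ?thesis unfolding a b c using True by simp
next
  case False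
  have a: "i + n - 1 = (i - 1) + n" using False by linarith
  have b: "((i - 1) + n) mod n = i - 1" using i by (simp add: mod_less)
  have c: "i - 1 + 1 = i" using False by linarith
  show ?thesis unfolding a b c using i by (rule mod_less)
qed

lemma net_setup:
  assumes n: "n \<ge> 1" and d: "d \<ge> 1"
  shows "contr_ctx (LG (PP n d)) (CIN n d) (PHY n d) (part n)"
proof
  show "finite (LG (PP n d))" by (rule finite_LG) (simp add: PP_def)
  show "CIN n d \<subseteq> LG (PP n d)" by (auto simp: CIN_def)
  show "PHY n d \<subseteq> CIN n d" by (auto simp: PHY_def CIN_def LG_def OUTL_def)
  fix x assume x: "x \<in> CIN n d - PHY n d"
  obtain i j l where xe: "x = (i,j,l)" by (cases x)
  have i: "i < n" and j: "j < d" and l: "l < 5" and l0: "l \<noteq> 0"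
    and nO: "\<not> (i < n \<and> ((j = 0 \<and> l = 3) \<or> (j = d - 1 \<and> l = 4)))"
    using x unfolding xe by (auto simp: CIN_def PHY_def LG_def PP_def OUTL_def)
  have memb: "(a,b,c) \<in> CIN n d - PHY n d" if "a < n" "b < d" "c < 5" "c \<noteq> 0" "c = 3 \<longrightarrow> b \<noteq> 0"
    "c = 4 \<longrightarrow> b \<noteq> d - 1" for a b c
    using that by (auto simp: CIN_def PHY_def LG_def PP_def OUTL_def)
  have "l = 1 \<or> l = 2 \<or> l = 3 \<or> l = 4" using l l0 by auto
  thus "part n x \<in> CIN n d - PHY n d \<and> part n x \<noteq> x \<and> part n (part n x) = x"
  proof (elim disjE)
    assume l1: "l = 1"
    define m where "m = (i+1) mod n"
    have m: "m < n" using n by (simp add: m_def)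
    have p1: "part n x = (m, j, 2)" by (simp add: xe l1 part_def m_def)
    have p2: "part n (m, j, 2) = ((m + n - 1) mod n, j, 1)" by (simp add: part_def)
    have "(m + n - 1) mod n = i" unfolding m_def by (rule mod1[OF i])
    thus ?thesis using p1 p2 memb[of m j 2] m j by (simp add: xe l1)
  next
    assume l2: "l = 2"
    define m where "m = (i+n-1) mod n"
    have m: "m < n" using n by (simp add: m_def)
    have p1: "part n x = (m, j, 1)" by (simp add: xe l2 part_def m_def)
    have p2: "part n (m, j, 1) = ((m + 1) mod n, j, 2)" by (simp add: part_def)
    have "(m + 1) mod n = i" unfolding m_def by (rule mod2[OF i])
    thus ?thesis using p1 p2 memb[of m j 1] m j by (simp add: xe l2)
  next
    assume l3: "l = 3"
    hence j1: "j \<ge> 1" using nO i by auto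
    have p1: "part n x = (i, j - 1, 4)" by (simp add: xe l3 part_def)
    have p2: "part n (i, j - 1, 4) = (i, j - 1 + 1, 3)" by (simp add: part_def)
    have "j - 1 \<noteq> d - 1" using j j1 by linarith
    moreover have "j - 1 < d" using j by linarith
    ultimately show ?thesis using p1 p2 memb[of i "j - 1" 4] i j1 by (simp add: xe l3)
  next
    assume l4: "l = 4"
    hence j1: "j + 1 < d" using nO i j by auto
    have p1: "part n x = (i, j + 1, 3)" by (simp add: xe l4 part_def)
    have p2: "part n (i, j + 1, 3) = (i, j, 4)" by (simp add: part_def)
    show ?thesis using p1 p2 memb[of i "j + 1" 3] i j1 by (simp add: xe l4)
  qed
qed

lemma I_minus_C: "d \<ge> 1 \<Longrightarrow> LG (PP n d) - CIN n d = OUTL n d"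
  by (auto simp: CIN_def LG_def PP_def OUTL_def)




lemma CIN_iff: "(i,j,l) \<in> CIN n d \<longleftrightarrow> i < n \<and> j < d \<and> l < 5 \<and> \<not> (j = 0 \<and> l = 3) \<and> \<not> (j = d - 1 \<and> l = 4)"
  by (auto simp: CIN_def LG_def PP_def OUTL_def)

lemma PHY_iff: "(i,j,l) \<in> PHY n d \<longleftrightarrow> i < n \<and> j < d \<and> l = 0"
  by (auto simp: PHY_def PP_def)

definition beta :: "nat \<Rightarrow> nat \<Rightarrow> (nat \<times> nat) set \<times> (nat \<times> nat) set \<times> (nat \<times> nat) set \<Rightarrow> nat \<times> nat \<times> nat \<Rightarrow> bool" where
  "beta n d \<sigma> x = (x \<in> CIN n d \<and> (case \<sigma> of (Sp, V, H) \<Rightarrow> case x of (i, j, l) \<Rightarrow>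
     (if l = 0 then (i,j) \<in> Sp else if l = 1 then (i,j) \<in> V else if l = 2 then ((i+n-1) mod n, j) \<in> V
      else if l = 3 then (i,j) \<in> H else (i,j+1) \<in> H)))"

lemma beta_simp: "beta n d (Sp,V,H) (i,j,l) = ((i,j,l) \<in> CIN n d \<and>
     (if l = 0 then (i,j) \<in> Sp else if l = 1 then (i,j) \<in> V else if l = 2 then ((i+n-1) mod n, j) \<in> V
      else if l = 3 then (i,j) \<in> H else (i,j+1) \<in> H))"
  by (simp add: beta_def)

definition gamma :: "nat \<Rightarrow> nat \<Rightarrow> (nat \<times> nat \<times> nat \<Rightarrow> bool) \<Rightarrow> (nat \<times> nat) set \<times> (nat \<times> nat) set \<times> (nat \<times> nat) set" where
  "gamma n d a = ({(i,j) \<in> PP n d. a (i,j,0)}, {(i,j) \<in> PP n d. a (i,j,1)}, {(i,j) \<in> QQ n d. a (i,j,3)})"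

lemma beta_bij:
  assumes n: "n \<ge> 1" and d: "d \<ge> 1"
  shows "bij_betw (beta n d) (Pow (PP n d) \<times> Pow (PP n d) \<times> Pow (QQ n d)) (DD (CIN n d) (PHY n d) (part n))"
proof (rule bij_betw_byWitness[where f'="gamma n d"])
  interpret cs: contr_ctx "LG (PP n d)" "CIN n d" "PHY n d" "part n" by (rule net_setup[OF n d])
  show "\<forall>\<sigma>\<in>Pow (PP n d) \<times> Pow (PP n d) \<times> Pow (QQ n d). gamma n d (beta n d \<sigma>) = \<sigma>"
  proof
    fix \<sigma> assume s: "\<sigma> \<in> Pow (PP n d) \<times> Pow (PP n d) \<times> Pow (QQ n d)"
    obtain Sp V H where se: "\<sigma> = (Sp,V,H)" by (cases \<sigma>) auto
    have "Sp \<subseteq> PP n d" "V \<subseteq> PP n d" "H \<subseteq> QQ n d" using s se by auto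
    thus "gamma n d (beta n d \<sigma>) = \<sigma>" unfolding se gamma_def
      by (auto simp: beta_simp CIN_iff PP_def QQ_def)
  qed
  show "\<forall>a\<in>DD (CIN n d) (PHY n d) (part n). beta n d (gamma n d a) = a"
  proof
    fix a assume a: "a \<in> DD (CIN n d) (PHY n d) (part n)"
    have a0: "\<And>x. x \<notin> CIN n d \<Longrightarrow> \<not> a x" and ap: "\<And>x. x \<in> CIN n d - PHY n d \<Longrightarrow> a (part n x) = a x"
      using a by (auto simp: DD_def)
    show "beta n d (gamma n d a) = a"
    proof
      fix x :: "nat \<times> nat \<times> nat"
      obtain i j l where xe: "x = (i,j,l)" by (cases x)
      show "beta n d (gamma n d a) x = a x"
      proof (cases "x \<in> CIN n d")
        case False thus ?thesis using a0 by (simp add: beta_def)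
      next
        case True
        hence c: "i < n" "j < d" "l < 5" "\<not> (j = 0 \<and> l = 3)" "\<not> (j = d - 1 \<and> l = 4)"
          using xe CIN_iff by auto
        have "l = 0 \<or> l = 1 \<or> l = 2 \<or> l = 3 \<or> l = 4" using c by auto
        thus ?thesis
        proof (elim disjE)
          assume "l = 0" thus ?thesis using True c by (simp add: xe beta_simp gamma_def PP_def)
        next
          assume "l = 1" thus ?thesis using True c by (simp add: xe beta_simp gamma_def PP_def)
        next
          assume l2: "l = 2"
          have "a (part n x) = a x" using True l2 xe by (intro ap) (simp add: PHY_iff)
          moreover have "part n x = ((i+n-1) mod n, j, 1)" by (simp add: xe l2 part_def)
          moreover have "(i+n-1) mod n < n" using n by simp
          ultimately show ?thesis using True c l2 by (simp add: xe beta_simp gamma_def PP_def)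
        next
          assume l3: "l = 3"
          thus ?thesis using True c by (simp add: xe beta_simp gamma_def QQ_def)
        next
          assume l4: "l = 4"
          have "a (part n x) = a x" using True l4 xe by (intro ap) (simp add: PHY_iff)
          moreover have "part n x = (i, j+1, 3)" by (simp add: xe l4 part_def)
          moreover have "j + 1 < d" using c l4 by auto
          ultimately show ?thesis using True c l4 by (simp add: xe beta_simp gamma_def QQ_def)
        qed
      qed
    qed
  qed
  show "beta n d ` (Pow (PP n d) \<times> Pow (PP n d) \<times> Pow (QQ n d)) \<subseteq> DD (CIN n d) (PHY n d) (part n)"
  proof
    fix b assume "b \<in> beta n d ` (Pow (PP n d) \<times> Pow (PP n d) \<times> Pow (QQ n d))"
    then obtain Sp V H where b: "b = beta n d (Sp,V,H)" by auto
    have "b (part n x) = b x" if x: "x \<in> CIN n d - PHY n d" for x :: "nat \<times> nat \<times> nat"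
    proof -
      obtain i j l where xe: "x = (i,j,l)" by (cases x)
      have pc: "part n x \<in> CIN n d" using cs.pin[OF x] by auto
      have c: "i < n" "j < d" "l < 5" "l \<noteq> 0" "\<not> (j = 0 \<and> l = 3)" "\<not> (j = d - 1 \<and> l = 4)"
        using x xe CIN_iff PHY_iff by auto
      have "l = 1 \<or> l = 2 \<or> l = 3 \<or> l = 4" using c by auto
      thus ?thesis
      proof (elim disjE)
        assume l1: "l = 1"
        have pe: "part n x = ((i+1) mod n, j, 2)" by (simp add: xe l1 part_def)
        have e1: "b (part n x) = ((i, j) \<in> V)" using pc unfolding pe b beta_simp mod1[OF c(1)] by simp
        have e2: "b x = ((i, j) \<in> V)" using x unfolding b xe l1 beta_simp by simp
        show ?thesis using e1 e2 by simp
      next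
        assume l2: "l = 2"
        have pe: "part n x = ((i+n-1) mod n, j, 1)" by (simp add: xe l2 part_def)
        have e1: "b (part n x) = (((i+n-1) mod n, j) \<in> V)" using pc unfolding pe b beta_simp by simp
        have e2: "b x = (((i+n-1) mod n, j) \<in> V)" using x unfolding b xe l2 beta_simp by simp
        show ?thesis using e1 e2 by simp
      next
        assume l3: "l = 3"
        have pe: "part n x = (i, j - 1, 4)" by (simp add: xe l3 part_def)
        have jj: "j - 1 + 1 = j" using c l3 by auto
        have e1: "b (part n x) = ((i, j) \<in> H)" using pc unfolding pe b beta_simp jj by simp
        have e2: "b x = ((i, j) \<in> H)" using x unfolding b xe l3 beta_simp by simp
        show ?thesis using e1 e2 by simp
      next
        assume l4: "l = 4"
        have pe: "part n x = (i, j + 1, 3)" by (simp add: xe l4 part_def)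
        have e1: "b (part n x) = ((i, j + 1) \<in> H)" using pc unfolding pe b beta_simp by simp
        have e2: "b x = ((i, j + 1) \<in> H)" using x unfolding b xe l4 beta_simp by simp
        show ?thesis using e1 e2 by simp
      qed
    qed
    moreover have "\<not> b x" if "x \<notin> CIN n d" for x using that b by (simp add: beta_def)
    ultimately show "b \<in> DD (CIN n d) (PHY n d) (part n)" by (auto simp: DD_def)
  qed
  show "gamma n d ` DD (CIN n d) (PHY n d) (part n) \<subseteq> Pow (PP n d) \<times> Pow (PP n d) \<times> Pow (QQ n d)"
    by (auto simp: gamma_def)
qed




lemma peps_sum:
  "peps_state A n d l r = (\<Sum>(Sp,V,H)\<in>Pow (PP n d) \<times> Pow (PP n d) \<times> Pow (QQ n d).
     (let hb = (\<lambda>i j. if j = 0 then l i else if j = d then r i else (i, j) \<in> H) in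
         \<Prod>(i, j)\<in>{0..<n} \<times> {0..<d}.
           complex_of_real (1 / sqrt 2) *
           A ((i, j) \<in> Sp) ((i, j) \<in> V) (((i + n - 1) mod n, j) \<in> V) (hb i j) (hb i (j + 1))))"
  unfolding peps_state_def PP_def QQ_def by (simp add: sum.cartesian_product)

lemma contr_peps:
  assumes n: "n \<ge> 1" and d: "d \<ge> 1"
  shows "contr (CIN n d) (PHY n d) (part n) (Psi A (PP n d)) t
       = peps_state A n d (\<lambda>i. t (i,0,3)) (\<lambda>i. t (i,d-1,4))"
proof -
  let ?dom = "Pow (PP n d) \<times> Pow (PP n d) \<times> Pow (QQ n d)"
  let ?D = "DD (CIN n d) (PHY n d) (part n)"
  have "contr (CIN n d) (PHY n d) (part n) (Psi A (PP n d)) t = (\<Sum>a\<in>?D. Psi A (PP n d) (ovr (CIN n d) t a))"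
    by (simp add: contr_def)
  also have "\<dots> = (\<Sum>\<sigma>\<in>?dom. Psi A (PP n d) (ovr (CIN n d) t (beta n d \<sigma>)))"
    by (rule sum.reindex_bij_betw[OF beta_bij[OF n d], symmetric])
  also have "\<dots> = peps_state A n d (\<lambda>i. t (i,0,3)) (\<lambda>i. t (i,d-1,4))"
    unfolding peps_sum
  proof (rule sum.cong[OF refl])
    fix \<sigma> assume "\<sigma> \<in> ?dom"
    obtain Sp V H where se: "\<sigma> = (Sp,V,H)" by (cases \<sigma>) auto
    let ?u = "ovr (CIN n d) t (beta n d (Sp,V,H))"
    let ?hb = "\<lambda>i j. if j = 0 then t (i,0,3) else if j = d then t (i,d-1,4) else (i, j) \<in> H"
    have "Psi A (PP n d) ?u = (\<Prod>(i, j)\<in>{0..<n} \<times> {0..<d}.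
           complex_of_real (1 / sqrt 2) *
           A ((i, j) \<in> Sp) ((i, j) \<in> V) (((i + n - 1) mod n, j) \<in> V) (?hb i j) (?hb i (j + 1)))"
      unfolding Psi_def PP_def
    proof (rule prod.cong[OF refl])
      fix x assume x: "x \<in> {0..<n} \<times> {0..<(d::nat)}"
      obtain i j where xe: "x = (i,j)" by (cases x)
      have i: "i < n" and j: "j < d" using x xe by auto
      have u0: "?u (i,j,0) = ((i,j) \<in> Sp)" using i j by (simp add: ovr_def beta_simp CIN_iff)
      have u1: "?u (i,j,1) = ((i,j) \<in> V)" using i j by (simp add: ovr_def beta_simp CIN_iff)
      have u2: "?u (i,j,2) = (((i + n - 1) mod n, j) \<in> V)" using i j by (simp add: ovr_def beta_simp CIN_iff)
      have u3: "?u (i,j,3) = ?hb i j"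
      proof (cases "j = 0")
        case True thus ?thesis using i j by (simp add: ovr_def CIN_iff)
      next
        case False thus ?thesis using i j by (simp add: ovr_def beta_simp CIN_iff)
      qed
      have u4: "?u (i,j,4) = ?hb i (j + 1)"
      proof (cases "j = d - 1")
        case True
        hence "j + 1 = d" using j by simp
        thus ?thesis using i j True by (simp add: ovr_def CIN_iff)
      next
        case False
        hence "j + 1 \<noteq> d" using j by simp
        thus ?thesis using i j False by (simp add: ovr_def beta_simp CIN_iff)
      qed
      show "(case x of (i, j) \<Rightarrow> site A i j ?u) =
        (case x of (i, j) \<Rightarrow> complex_of_real (1 / sqrt 2) *
           A ((i, j) \<in> Sp) ((i, j) \<in> V) (((i + n - 1) mod n, j) \<in> V) (?hb i j) (?hb i (j + 1)))"
        unfolding xe site_def prod.case u0 u1 u2 u3 u4 ..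
    qed
    thus "Psi A (PP n d) (ovr (CIN n d) t (beta n d \<sigma>)) = (case \<sigma> of (Sp, V, H) \<Rightarrow>
       let hb = \<lambda>i j. if j = 0 then t (i, 0, 3) else if j = d then t (i, d - 1, 4) else (i, j) \<in> H
       in \<Prod>(i, j)\<in>{0..<n} \<times> {0..<d}. complex_of_real (1 / sqrt 2) *
          A ((i, j) \<in> Sp) ((i, j) \<in> V) (((i + n - 1) mod n, j) \<in> V) (hb i j) (hb i (j + 1)))"
      unfolding se by (simp only: Let_def prod.case)
  qed
  finally show ?thesis .
qed


definition rho :: "nat \<Rightarrow> nat \<times> nat \<times> nat \<Rightarrow> nat" where
  "rho n x = (if snd (snd x) = 3 then fst x else n + fst x)"

lemma good_peps_nat:
  assumes A: "stabilizer_tensor_51 A" and n: "n \<ge> 1" and d: "d \<ge> 1"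
  shows "good {0..<2*n} (\<lambda>u. peps_state A n d u (\<lambda>i. u (n + i)))"
proof -
  interpret cs: contr_ctx "LG (PP n d)" "CIN n d" "PHY n d" "part n" by (rule net_setup[OF n d])
  have finP: "finite (PP n d)" by (simp add: PP_def)
  have gP: "good (LG (PP n d)) (Psi A (PP n d))" and lP: "loc (LG (PP n d)) (Psi A (PP n d))"
    using good_Psi[OF A finP] by auto
  have g1: "good (LG (PP n d) - CIN n d) (contr (CIN n d) (PHY n d) (part n) (Psi A (PP n d)))"
    by (rule cs.good_contr[OF gP lP])
  have l1: "loc (LG (PP n d) - CIN n d) (contr (CIN n d) (PHY n d) (part n) (Psi A (PP n d)))"
    by (rule loc_contr[OF lP])
  let ?G = "\<lambda>t. peps_state A n d (\<lambda>i. t (i,0,3)) (\<lambda>i. t (i,d-1,4))"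
  have ce: "contr (CIN n d) (PHY n d) (part n) (Psi A (PP n d)) = ?G"
    using contr_peps[OF n d] by (simp add: fun_eq_iff)
  have g2: "good (OUTL n d) ?G" and l2: "loc (OUTL n d) ?G"
    using g1 l1 unfolding ce I_minus_C[OF d] by auto
  have finO: "finite (OUTL n d)"
  proof -
    have "OUTL n d \<subseteq> LG (PP n d)" using d by (auto simp: OUTL_def LG_def PP_def)
    thus ?thesis using finite_LG[OF finP] finite_subset by blast
  qed
  have inj: "inj_on (rho n) (OUTL n d)" by (auto simp: inj_on_def OUTL_def rho_def)
  have img: "rho n ` OUTL n d = {0..<2*n}"
  proof
    show "rho n ` OUTL n d \<subseteq> {0..<2*n}" by (auto simp: OUTL_def rho_def)
    show "{0..<2*n} \<subseteq> rho n ` OUTL n d"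
    proof
      fix k assume k: "k \<in> {0..<2*n}"
      show "k \<in> rho n ` OUTL n d"
      proof (cases "k < n")
        case True
        have "(k,0,3) \<in> OUTL n d" using True by (simp add: OUTL_def)
        moreover have "rho n (k,0,3) = k" by (simp add: rho_def)
        ultimately show ?thesis by (metis image_eqI)
      next
        case False
        have "(k - n, d - 1, 4) \<in> OUTL n d" using False k by (auto simp: OUTL_def)
        moreover have "rho n (k - n, d - 1, 4) = k" using False by (simp add: rho_def)
        ultimately show ?thesis by (metis image_eqI)
      qed
    qed
  qed
  have g3: "good (rho n ` OUTL n d) (\<lambda>u. ?G (u \<circ> rho n))"
    by (rule good_relabel[OF finO inj g2 l2])
  have "(\<lambda>u. ?G (u \<circ> rho n)) = (\<lambda>u. peps_state A n d u (\<lambda>i. u (n + i)))"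
    by (simp add: rho_def fun_eq_iff)
  thus ?thesis using g3 img by simp
qed




lemma peps_loc:
  assumes "\<And>i. i < n \<Longrightarrow> l i = l' i" "\<And>i. i < n \<Longrightarrow> r i = r' i"
  shows "peps_state A n d l r = peps_state A n d l' r'"
  unfolding peps_state_def Let_def
  by (intro sum.cong refl prod.cong) (auto simp: assms)

definition EE :: "nat \<Rightarrow> (nat \<Rightarrow> bool \<times> bool) \<Rightarrow> (nat \<Rightarrow> bool \<times> bool) \<Rightarrow> nat \<Rightarrow> bool \<times> bool" where
  "EE n a b = (\<lambda>i. if i < n then a i else b (i - n))"
definition JJ :: "nat \<Rightarrow> (nat \<Rightarrow> bool) \<Rightarrow> (nat \<Rightarrow> bool) \<Rightarrow> nat \<Rightarrow> bool" where
  "JJ n l r = (\<lambda>i. if i < n then l i else r (i - n))"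

lemma sg_2n: fixes n :: nat shows "sg {0..<2*n} P = sg {0..<n} P * sg {0..<n} (\<lambda>i. P (n + i))"
proof -
  have "sg {0..<2*n} P = sg ({0..<2*n} - {0..<n}) P * sg {0..<n} P"
    by (rule sg_split) auto
  also have "{0..<2*n} - {0..<n} = (\<lambda>i. n + i) ` {0..<n}"
  proof
    show "{0..<2*n} - {0..<n} \<subseteq> (\<lambda>i. n + i) ` {0..<n}"
    proof
      fix k assume "k \<in> {0..<2*n} - {0..<n}"
      hence "k = n + (k - n)" "k - n \<in> {0..<n}" by auto
      thus "k \<in> (\<lambda>i. n + i) ` {0..<n}" by blast
    qed
  qed auto
  also have "sg ((\<lambda>i. n + i) ` {0..<n}) P = sg {0..<n} (\<lambda>i. P (n + i))"
    by (rule sg_reindex) (auto simp: inj_on_def)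
  finally show ?thesis by simp
qed

lemma EE_VI: "a \<in> paulis n \<Longrightarrow> b \<in> paulis n \<Longrightarrow> EE n a b \<in> VI {0..<2*n}"
  by (auto simp: EE_def VI_def paulis_def)

lemma sympl_EE: "sympl {0..<2*n} (EE n a b) (EE n a' b') = sympl {0..<n} a a' * sympl {0..<n} b b'"
proof -
  have 1: "sg {0..<n} (\<lambda>i. om1 (EE n a b i) (EE n a' b' i)) = sg {0..<n} (\<lambda>i. om1 (a i) (a' i))"
    by (rule sg_cong) (simp add: EE_def)
  have 2: "sg {0..<n} (\<lambda>i. om1 (EE n a b (n + i)) (EE n a' b' (n + i))) = sg {0..<n} (\<lambda>i. om1 (b i) (b' i))"
    by (rule sg_cong) (simp add: EE_def)
  show ?thesis unfolding sympl_def sg_2n 1 2 ..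
qed

lemma key:
  assumes "pL \<in> paulis n" "pR \<in> paulis n"
  shows "pauli_apply n pL (\<lambda>l'. pauli_apply n pR (peps_state A n d l') r) l
       = papp {0..<2*n} (EE n pL pR) (\<lambda>u. peps_state A n d u (\<lambda>i. u (n + i))) (JJ n l r)"
proof -
  have s: "sg {0..<2*n} (\<lambda>i. snd (EE n pL pR i) \<and> (JJ n l r i \<noteq> fst (EE n pL pR i)))
     = sg {0..<n} (\<lambda>i. snd (pL i) \<and> (l i \<noteq> fst (pL i))) * sg {0..<n} (\<lambda>i. snd (pR i) \<and> (r i \<noteq> fst (pR i)))"
  proof -
    have 1: "sg {0..<n} (\<lambda>i. snd (EE n pL pR i) \<and> (JJ n l r i \<noteq> fst (EE n pL pR i))) = sg {0..<n} (\<lambda>i. snd (pL i) \<and> (l i \<noteq> fst (pL i)))"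
      by (rule sg_cong) (simp add: EE_def JJ_def)
    have 2: "sg {0..<n} (\<lambda>i. snd (EE n pL pR (n + i)) \<and> (JJ n l r (n + i) \<noteq> fst (EE n pL pR (n + i)))) = sg {0..<n} (\<lambda>i. snd (pR i) \<and> (r i \<noteq> fst (pR i)))"
      by (rule sg_cong) (simp add: EE_def JJ_def)
    show ?thesis unfolding sg_2n 1 2 ..
  qed
  have p: "peps_state A n d (flp {0..<2*n} (EE n pL pR) (JJ n l r)) (\<lambda>i. flp {0..<2*n} (EE n pL pR) (JJ n l r) (n + i))
     = peps_state A n d (flp {0..<n} pL l) (flp {0..<n} pR r)"
    by (rule peps_loc) (auto simp: flp_def EE_def JJ_def)
  show ?thesis
    unfolding pauli_apply_papp papp_def[of "{0..<2*n}"] s p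
    by (simp add: papp_def algebra_simps)
qed

lemma JJ_peps: "peps_state A n d (JJ n l r) (\<lambda>i. JJ n l r (n + i)) = peps_state A n d l r"
  by (rule peps_loc) (auto simp: JJ_def)

lemma JJ_split: "JJ n u (\<lambda>i. u (n + i)) = u"
  by (auto simp: JJ_def fun_eq_iff)

lemma S_full_iff:
  assumes "pL \<in> paulis n" "pR \<in> paulis n"
  shows "(pL, pR) \<in> S_full A n d \<longleftrightarrow> EE n pL pR \<in> stab {0..<2*n} (\<lambda>u. peps_state A n d u (\<lambda>i. u (n + i)))"
  (is "?L \<longleftrightarrow> ?R")
proof
  assume ?L
  then obtain c where c: "\<And>l r. pauli_apply n pL (\<lambda>l'. pauli_apply n pR (peps_state A n d l') r) l = c * peps_state A n d l r"
    by (auto simp: S_full_def)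
  have "papp {0..<2*n} (EE n pL pR) (\<lambda>u. peps_state A n d u (\<lambda>i. u (n + i))) u = c * peps_state A n d u (\<lambda>i. u (n + i))" for u
    using key[OF assms, where l=u and r="\<lambda>i. u (n + i)" and A=A and d=d] c[where l=u and r="\<lambda>i. u (n + i)"] JJ_split[of n u] by simp
  thus ?R using EE_VI[OF assms] by (auto simp: stab_def)
next
  assume ?R
  then obtain c where c: "\<And>u. papp {0..<2*n} (EE n pL pR) (\<lambda>u. peps_state A n d u (\<lambda>i. u (n + i))) u = c * peps_state A n d u (\<lambda>i. u (n + i))"
    by (auto simp: stab_def)
  have "pauli_apply n pL (\<lambda>l'. pauli_apply n pR (peps_state A n d l') r) l = c * peps_state A n d l r" for l r
    using key[OF assms, where l=l and r=r and A=A and d=d] c[of "JJ n l r"] JJ_peps[of A n d l r] by simp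
  thus ?L using assms by (auto simp: S_full_def)
qed


lemma EE_pz: "EE n pz pz = pz" by (auto simp: EE_def pz_def)
lemma EE_add: "EE n (padd a a') (padd b b') = padd (EE n a b) (EE n a' b')"
  by (auto simp: EE_def padd_def fun_eq_iff)
lemma pz_paulis: "pz \<in> paulis n" by (simp add: paulis_def pz_def)
lemma padd_paulis: "a \<in> paulis n \<Longrightarrow> b \<in> paulis n \<Longrightarrow> padd a b \<in> paulis n"
  by (simp add: paulis_VI padd_VI)

theorem corollary1:
  fixes A :: tensor and n d :: nat and x :: "nat \<Rightarrow> bool \<times> bool"
  assumes "stabilizer_tensor_51 A" and "n \<ge> 1" and "d \<ge> 1" and "x \<in> paulis n"
  shows "x \<in> S_L A n d \<longleftrightarrow> (\<forall>z \<in> Z_L A n d. pauli_commute n x z)"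
proof -
  let ?w = "\<lambda>u. peps_state A n d u (\<lambda>i. u (n + i))"
  let ?St = "stab {0..<2*n} ?w"
  let ?SL = "S_L A n d"
  have SL_iff: "a \<in> ?SL \<longleftrightarrow> (\<exists>b. a \<in> paulis n \<and> b \<in> paulis n \<and> EE n a b \<in> ?St)" for a
  proof
    assume "a \<in> ?SL"
    then obtain b where ab: "(a,b) \<in> S_full A n d" by (auto simp: S_L_def)
    hence "a \<in> paulis n" "b \<in> paulis n" by (auto simp: S_full_def)
    thus "\<exists>b. a \<in> paulis n \<and> b \<in> paulis n \<and> EE n a b \<in> ?St" using ab S_full_iff by blast
  next
    assume "\<exists>b. a \<in> paulis n \<and> b \<in> paulis n \<and> EE n a b \<in> ?St"
    then obtain b where "a \<in> paulis n" "b \<in> paulis n" "EE n a b \<in> ?St" by blast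
    hence "(a,b) \<in> S_full A n d" using S_full_iff by blast
    thus "a \<in> ?SL" unfolding S_L_def by (metis fst_conv image_eqI)
  qed
  have comm_sym: "pauli_commute n p q = pauli_commute n q p" for p q
    by (simp add: pauli_commute_sympl sympl_sym)
  have fwd: "\<forall>z \<in> Z_L A n d. pauli_commute n x z" if "x \<in> ?SL"
    using that comm_sym by (auto simp: Z_L_def)
  show ?thesis
  proof (cases "\<exists>u0. ?w u0 \<noteq> 0")
    case False
    hence w0: "\<And>u. ?w u = 0" by blast
    have "EE n x pz \<in> ?St"
      using EE_VI[OF assms(4) pz_paulis] by (auto simp: stab_def papp_def w0 intro: exI[of _ 0])
    hence "x \<in> ?SL" using SL_iff assms(4) pz_paulis by blast
    thus ?thesis using fwd by blast
  next
    case True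
    then obtain u0 where u0: "?w u0 \<noteq> 0" by blast
    obtain S0 where S0: "lag {0..<2*n} S0" "S0 \<subseteq> ?St"
      using good_peps_nat[OF assms(1-3)] by (auto simp: good_def)
    have StV: "?St \<subseteq> VI {0..<2*n}" by (auto simp: stab_def)
    have "?St \<subseteq> perp {0..<2*n} ?St" using stab_iso[where f="?w", OF u0] StV by (auto simp: perp_def)
    also have "\<dots> \<subseteq> perp {0..<2*n} S0" by (rule perp_anti[OF S0(2)])
    also have "\<dots> = S0" using S0(1) by (simp add: lag_def)
    finally have "?St = S0" using S0(2) by blast
    hence pSt: "perp {0..<2*n} ?St = ?St" using S0(1) by (simp add: lag_def)
    have SLV: "?SL \<subseteq> VI {0..<n}" using SL_iff paulis_VI by blast
    have sgSL: "subgrp {0..<n} ?SL"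
      unfolding subgrp_def
    proof (intro conjI ballI)
      show "?SL \<subseteq> VI {0..<n}" by (rule SLV)
      have "EE n pz pz \<in> ?St" unfolding EE_pz using stab_subgrp by (auto simp: subgrp_def)
      thus "pz \<in> ?SL" using SL_iff pz_paulis by blast
      fix a a' assume "a \<in> ?SL" "a' \<in> ?SL"
      then obtain b b' where bb: "a \<in> paulis n" "b \<in> paulis n" "EE n a b \<in> ?St"
          "a' \<in> paulis n" "b' \<in> paulis n" "EE n a' b' \<in> ?St" using SL_iff by meson
      have "EE n (padd a a') (padd b b') \<in> ?St" unfolding EE_add using bb stab_subgrp by (auto simp: subgrp_def)
      thus "padd a a' \<in> ?SL" using SL_iff bb padd_paulis by blast
    qed
    have perpSL: "perp {0..<n} ?SL \<subseteq> ?SL"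
    proof
      fix a assume a: "a \<in> perp {0..<n} ?SL"
      have ap: "a \<in> paulis n" using a by (simp add: perp_def paulis_VI)
      have "EE n a pz \<in> perp {0..<2*n} ?St"
      proof -
        have "sympl {0..<2*n} (EE n a pz) s = 1" if s: "s \<in> ?St" for s
        proof -
          define sL where "sL = (\<lambda>i. if i < n then s i else (False,False))"
          define sR where "sR = (\<lambda>i. if i < n then s (n + i) else (False,False))"
          have sV: "s \<in> VI {0..<2*n}" using s StV by blast
          have se: "s = EE n sL sR"
          proof
            fix i show "s i = EE n sL sR i"
              using sV by (cases "i < n"; cases "i < 2*n") (auto simp: EE_def sL_def sR_def VI_def)
          qed
          have sp: "sL \<in> paulis n" "sR \<in> paulis n" by (auto simp: sL_def sR_def paulis_def)
          have "sL \<in> ?SL" using SL_iff sp s se by blast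
          hence "sympl {0..<n} a sL = 1" using a by (simp add: perp_def)
          thus ?thesis unfolding se sympl_EE by simp
        qed
        thus ?thesis using EE_VI[OF ap pz_paulis] by (simp add: perp_def)
      qed
      hence "EE n a pz \<in> ?St" using pSt by simp
      thus "a \<in> ?SL" using SL_iff ap pz_paulis by blast
    qed
    have "x \<in> ?SL" if h: "\<forall>z \<in> Z_L A n d. pauli_commute n x z"
    proof -
      have "x \<in> perp {0..<n} (perp {0..<n} ?SL)"
      proof -
        have "sympl {0..<n} x z = 1" if z: "z \<in> perp {0..<n} ?SL" for z
        proof -
          have "z \<in> ?SL" using z perpSL by blast
          moreover have "\<forall>y \<in> ?SL. pauli_commute n z y" using z by (simp add: perp_def pauli_commute_sympl)
          ultimately have "z \<in> Z_L A n d" by (simp add: Z_L_def)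
          thus ?thesis using h by (simp add: pauli_commute_sympl)
        qed
        thus ?thesis using assms(4) by (simp add: perp_def paulis_VI)
      qed
      thus ?thesis using perp_perp[OF _ sgSL] by simp
    qed
    thus ?thesis using fwd by blast
  qed
qed


end
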